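(* The expected value of $d_4(\nu)$, where $\nu$ is chosen uniformly among all convex polyominoes with $d_2(\nu)+d_3(\nu)=n$, is asymptotic as $n\to\infty$ to $$\frac{n}{\sqrt{5}}-\frac{\sqrt[4]{125}(\sqrt{5}-1)\sqrt{n}}{10\sqrt{\pi}},$$ where $f_n\sim g_n$ means $\lim_{n\to\infty}f_n/g_n=1$.
   Context: A cell is a unit square in the plane whose center is an integer point and whose sides are parallel to the axes. A polyomino is a finite set of cells which is connected under edge-adjacency; polyominoes are considered up to translation. A polyomino is convex if each of its columns and each of its rows is a single contiguous block of cells. A vertex of $\nu$ is a corner of some cell of $\nu$; it is interior if it is a corner of exactly four cells of $\nu$, and a boundary vertex otherwise. The degree of a vertex $w$ of $\nu$ is the number of unit edges that are sides of cells of $\nu$ and have $w$ as an endpoint. $d_m(\nu)$ denotes the number of boundary vertices of $\nu$ of degree $m$ ($m=2,3,4$). *)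

theory Defs
  imports Complex_Main
begin

text \<open>A cell is identified with its integer center. A polyomino is a finite nonempty
set of cells connected under edge-adjacency.\<close>

type_synonym cell = "int \<times> int"

definition edge_adj :: "cell \<Rightarrow> cell \<Rightarrow> bool" where
  "edge_adj c d \<longleftrightarrow> \<bar>fst c - fst d\<bar> + \<bar>snd c - snd d\<bar> = 1"

definition polyomino :: "cell set \<Rightarrow> bool" where
  "polyomino P \<longleftrightarrow> finite P \<and> P \<noteq> {} \<and>
     (\<forall>c\<in>P. \<forall>d\<in>P. (c, d) \<in> {(a, b). a \<in> P \<and> b \<in> P \<and> edge_adj a b}\<^sup>*)"

definition convex_polyomino :: "cell set \<Rightarrow> bool" where
  "convex_polyomino P \<longleftrightarrow> polyomino P \<and>
     (\<forall>y x1 x2 x. (x1, y) \<in> P \<longrightarrow> (x2, y) \<in> P \<longrightarrow> x1 \<le> x \<longrightarrow> x \<le> x2 \<longrightarrow> (x, y) \<in> P) \<and>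
     (\<forall>x y1 y2 y. (x, y1) \<in> P \<longrightarrow> (x, y2) \<in> P \<longrightarrow> y1 \<le> y \<longrightarrow> y \<le> y2 \<longrightarrow> (x, y) \<in> P)"

text \<open>Vertices: the cell with center (a,b) has corners (a \<plusminus> 1/2, b \<plusminus> 1/2). We encode the
point (i - 1/2, j - 1/2) by the integer pair (i,j); thus vertex (i,j) is a corner of the
cells (i,j), (i-1,j), (i,j-1), (i-1,j-1).\<close>

definition corner_cells :: "int \<times> int \<Rightarrow> cell set" where
  "corner_cells v = {(fst v, snd v), (fst v - 1, snd v), (fst v, snd v - 1), (fst v - 1, snd v - 1)}"

definition vertices :: "cell set \<Rightarrow> (int \<times> int) set" where
  "vertices P = {v. corner_cells v \<inter> P \<noteq> {}}"

definition interior_vertex :: "cell set \<Rightarrow> int \<times> int \<Rightarrow> bool" where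
  "interior_vertex P v \<longleftrightarrow> corner_cells v \<subseteq> P"

text \<open>Unit edges at vertex (i,j): a unit segment is a side of a cell of P iff one of the two
cells adjacent to that segment belongs to P.\<close>

definition unit_edges_at :: "cell set \<Rightarrow> int \<times> int \<Rightarrow> (int \<times> int) set" where
  "unit_edges_at P v = (let i = fst v; j = snd v in
     {w. (w = (i + 1, j) \<and> ((i, j) \<in> P \<or> (i, j - 1) \<in> P))
       \<or> (w = (i - 1, j) \<and> ((i - 1, j) \<in> P \<or> (i - 1, j - 1) \<in> P))
       \<or> (w = (i, j + 1) \<and> ((i, j) \<in> P \<or> (i - 1, j) \<in> P))
       \<or> (w = (i, j - 1) \<and> ((i, j - 1) \<in> P \<or> (i - 1, j - 1) \<in> P))})"

definition vdegree :: "cell set \<Rightarrow> int \<times> int \<Rightarrow> nat" where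
  "vdegree P v = card (unit_edges_at P v)"

definition d :: "nat \<Rightarrow> cell set \<Rightarrow> nat" where
  "d m P = card {v \<in> vertices P. \<not> interior_vertex P v \<and> vdegree P v = m}"

text \<open>Polyominoes are considered up to translation; we pick the unique translate
whose minimal x- and y-coordinates are 0 as representative.\<close>

definition normalized :: "cell set \<Rightarrow> bool" where
  "normalized P \<longleftrightarrow> (\<forall>c\<in>P. 0 \<le> fst c \<and> 0 \<le> snd c) \<and>
     (\<exists>c\<in>P. fst c = 0) \<and> (\<exists>c\<in>P. snd c = 0)"

definition convex_polys_n :: "nat \<Rightarrow> cell set set" where
  "convex_polys_n n = {P. convex_polyomino P \<and> normalized P \<and> d 2 P + d 3 P = n}"

definition expected_d4 :: "nat \<Rightarrow> real" where
  "expected_d4 n = (\<Sum>P\<in>convex_polys_n n. real (d 4 P)) / real (card (convex_polys_n n))"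

end

theory Submission
  imports Defs
begin


definition Npat :: "bool \<Rightarrow> bool \<Rightarrow> bool \<Rightarrow> bool \<Rightarrow> bool" where
  "Npat A B C D \<longleftrightarrow> (A \<or> B \<or> C \<or> D) \<and> \<not> (A \<and> B \<and> C \<and> D) \<and>
     of_bool (C \<or> D) + of_bool (A \<or> B) + of_bool (B \<or> D) + of_bool (A \<or> C) \<in> {2, 3::nat}"

definition Dpat :: "bool \<Rightarrow> bool \<Rightarrow> bool \<Rightarrow> bool \<Rightarrow> bool" where
  "Dpat A B C D \<longleftrightarrow> (A \<or> B \<or> C \<or> D) \<and> \<not> (A \<and> B \<and> C \<and> D) \<and>
     of_bool (C \<or> D) + of_bool (A \<or> B) + of_bool (B \<or> D) + of_bool (A \<or> C) = (4::nat)"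

lemma unit_edges_eq:
  "unit_edges_at P (i, j) =
     (if (i, j) \<in> P \<or> (i, j - 1) \<in> P then {(i + 1, j)} else {}) \<union>
     (if (i - 1, j) \<in> P \<or> (i - 1, j - 1) \<in> P then {(i - 1, j)} else {}) \<union>
     (if (i, j) \<in> P \<or> (i - 1, j) \<in> P then {(i, j + 1)} else {}) \<union>
     (if (i, j - 1) \<in> P \<or> (i - 1, j - 1) \<in> P then {(i, j - 1)} else {})"
  unfolding unit_edges_at_def Let_def by auto

lemma vdegree_eq:
  "vdegree P (i, j) =
     of_bool ((i, j - 1) \<in> P \<or> (i, j) \<in> P) + of_bool ((i - 1, j - 1) \<in> P \<or> (i - 1, j) \<in> P)
   + of_bool ((i - 1, j) \<in> P \<or> (i, j) \<in> P) + of_bool ((i - 1, j - 1) \<in> P \<or> (i, j - 1) \<in> P)"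
  unfolding vdegree_def unit_edges_eq
  by (auto simp: card_insert_if)

lemma vert_iff: "(i, j) \<in> vertices P \<longleftrightarrow>
   ((i - 1, j - 1) \<in> P \<or> (i - 1, j) \<in> P \<or> (i, j - 1) \<in> P \<or> (i, j) \<in> P)"
  unfolding vertices_def corner_cells_def by auto

lemma int_iff: "interior_vertex P (i, j) \<longleftrightarrow>
   ((i - 1, j - 1) \<in> P \<and> (i - 1, j) \<in> P \<and> (i, j - 1) \<in> P \<and> (i, j) \<in> P)"
  unfolding interior_vertex_def corner_cells_def by auto

definition NV :: "cell set \<Rightarrow> (int \<times> int) set" where
  "NV P = {(i, j). Npat ((i - 1, j - 1) \<in> P) ((i - 1, j) \<in> P) ((i, j - 1) \<in> P) ((i, j) \<in> P)}"
definition DV :: "cell set \<Rightarrow> (int \<times> int) set" where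
  "DV P = {(i, j). Dpat ((i - 1, j - 1) \<in> P) ((i - 1, j) \<in> P) ((i, j - 1) \<in> P) ((i, j) \<in> P)}"

lemma finite_NV_aux: fixes P :: "cell set" assumes "finite P"
  shows "finite {(i, j). (i - 1, j - 1) \<in> P \<or> (i - 1, j) \<in> P \<or> (i, j - 1) \<in> P \<or> (i, j) \<in> P}"
proof -
  have "{(i, j). (i - 1, j - 1) \<in> P \<or> (i - 1, j) \<in> P \<or> (i, j - 1) \<in> P \<or> (i, j) \<in> P} \<subseteq>
     (\<lambda>(a,b). (a+1,b+1)) ` P \<union> (\<lambda>(a,b). (a+1,b)) ` P \<union> (\<lambda>(a,b). (a,b+1)) ` P \<union> P"
  proof
    fix v assume "v \<in> {(i, j). (i - 1, j - 1) \<in> P \<or> (i - 1, j) \<in> P \<or> (i, j - 1) \<in> P \<or> (i, j) \<in> P}"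
    then obtain i j where v: "v = (i, j)" and h: "(i - 1, j - 1) \<in> P \<or> (i - 1, j) \<in> P \<or> (i, j - 1) \<in> P \<or> (i, j) \<in> P" by auto
    have e1: "(i, j) = (\<lambda>(a,b). (a+1,b+1)) (i - 1, j - 1)" by simp
    have e2: "(i, j) = (\<lambda>(a,b). (a+1,b)) (i - 1, j)" by simp
    have e3: "(i, j) = (\<lambda>(a,b). (a,b+1)) (i, j - 1)" by simp
    from h show "v \<in> (\<lambda>(a,b). (a+1,b+1)) ` P \<union> (\<lambda>(a,b). (a+1,b)) ` P \<union> (\<lambda>(a,b). (a,b+1)) ` P \<union> P"
      unfolding v using e1 e2 e3 by (metis UnI1 UnI2 imageI)
  qed
  moreover have "finite ((\<lambda>(a,b). (a+1,b+1)) ` P \<union> (\<lambda>(a,b). (a+1,b)) ` P \<union> (\<lambda>(a,b). (a,b+1)) ` P \<union> P)"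
    using assms by simp
  ultimately show ?thesis using finite_subset by blast
qed

lemma finite_NV: "finite P \<Longrightarrow> finite (NV P)"
  by (rule finite_subset[OF _ finite_NV_aux]) (auto simp: NV_def Npat_def)
lemma finite_DV: "finite P \<Longrightarrow> finite (DV P)"
  by (rule finite_subset[OF _ finite_NV_aux]) (auto simp: DV_def Dpat_def)

lemma d23_eq: assumes "finite P" shows "d 2 P + d 3 P = card (NV P)"
proof -
  have e2: "{v \<in> vertices P. \<not> interior_vertex P v \<and> vdegree P v = 2} = {v \<in> NV P. vdegree P v = 2}"
    by (auto simp: NV_def Npat_def vert_iff int_iff vdegree_eq of_bool_def split: if_splits)
  have e3: "{v \<in> vertices P. \<not> interior_vertex P v \<and> vdegree P v = 3} = {v \<in> NV P. vdegree P v = 3}"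
    by (auto simp: NV_def Npat_def vert_iff int_iff vdegree_eq of_bool_def split: if_splits)
  have u: "NV P = {v \<in> NV P. vdegree P v = 2} \<union> {v \<in> NV P. vdegree P v = 3}"
    by (auto simp: NV_def Npat_def vdegree_eq)
  have "card (NV P) = card {v \<in> NV P. vdegree P v = 2} + card {v \<in> NV P. vdegree P v = 3}"
    by (subst u, rule card_Un_disjoint) (use finite_NV[OF assms] in auto)
  then show ?thesis unfolding d_def e2 e3 by simp
qed

lemma d4_eq: "d 4 P = card (DV P)"
proof -
  have "{v \<in> vertices P. \<not> interior_vertex P v \<and> vdegree P v = 4} = DV P"
    by (auto simp: DV_def Dpat_def vert_iff int_iff vdegree_eq of_bool_def split: if_splits)
  then show ?thesis unfolding d_def by simp
qed


lemma Npat_alt: "Npat A B C D \<longleftrightarrow>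
  (A \<and> \<not>B \<and> \<not>C \<and> \<not>D) \<or> (\<not>A \<and> B \<and> \<not>C \<and> \<not>D) \<or> (\<not>A \<and> \<not>B \<and> C \<and> \<not>D) \<or> (\<not>A \<and> \<not>B \<and> \<not>C \<and> D) \<or>
  (A \<and> B \<and> \<not>C \<and> \<not>D) \<or> (\<not>A \<and> \<not>B \<and> C \<and> D) \<or> (A \<and> \<not>B \<and> C \<and> \<not>D) \<or> (\<not>A \<and> B \<and> \<not>C \<and> D)"
  by (cases A; cases B; cases C; cases D) (simp_all add: Npat_def)
lemma Dpat_alt: "Dpat A B C D \<longleftrightarrow>
  (\<not>A \<and> B \<and> C \<and> D) \<or> (A \<and> \<not>B \<and> C \<and> D) \<or> (A \<and> B \<and> \<not>C \<and> D) \<or> (A \<and> B \<and> C \<and> \<not>D) \<or>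
  (A \<and> \<not>B \<and> \<not>C \<and> D) \<or> (\<not>A \<and> B \<and> C \<and> \<not>D)"
  by (cases A; cases B; cases C; cases D) (simp_all add: Dpat_def)

lemma NS_eq:
  fixes p q p' q' :: int
  assumes "p \<le> q" "p' \<le> q'" "p' \<le> q" "p \<le> q'"
  shows "{j. Npat (p \<le> j-1 \<and> j-1 \<le> q) (p\<le>j \<and> j\<le>q) (p' \<le> j-1 \<and> j-1\<le>q') (p'\<le>j \<and> j\<le>q')}
    = (if p = p' then {p} else {min p p'..max p p' - 1}) \<union> (if q = q' then {q+1} else {min q q'+2..max q q'+1})"
proof (rule set_eqI)
  fix j
  show "j \<in> {j. Npat (p \<le> j-1 \<and> j-1 \<le> q) (p\<le>j \<and> j\<le>q) (p' \<le> j-1 \<and> j-1\<le>q') (p'\<le>j \<and> j\<le>q')} \<longleftrightarrow>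
     j \<in> (if p = p' then {p} else {min p p'..max p p' - 1}) \<union> (if q = q' then {q+1} else {min q q'+2..max q q'+1})"
    using assms unfolding Npat_alt mem_Collect_eq Un_iff by (cases "p = p'"; cases "q = q'"; simp; smt)
qed

lemma DS_eq:
  fixes p q p' q' :: int
  assumes "p \<le> q" "p' \<le> q'" "p' \<le> q" "p \<le> q'"
  shows "{j. Dpat (p \<le> j-1 \<and> j-1 \<le> q) (p\<le>j \<and> j\<le>q) (p' \<le> j-1 \<and> j-1\<le>q') (p'\<le>j \<and> j\<le>q')}
    = (if p = p' then {} else {max p p'}) \<union> (if q = q' then {} else {min q q'+1})"
proof (rule set_eqI)
  fix j
  show "j \<in> {j. Dpat (p \<le> j-1 \<and> j-1 \<le> q) (p\<le>j \<and> j\<le>q) (p' \<le> j-1 \<and> j-1\<le>q') (p'\<le>j \<and> j\<le>q')} \<longleftrightarrow>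
     j \<in> (if p = p' then {} else {max p p'}) \<union> (if q = q' then {} else {min q q'+1})"
    using assms unfolding Dpat_alt mem_Collect_eq Un_iff by (cases "p = p'"; cases "q = q'"; simp; smt)
qed

definition ct :: "int \<Rightarrow> nat" where "ct x = (if x = 0 then 1 else nat \<bar>x\<bar>)"

lemma card_NS:
  fixes p q p' q' :: int
  assumes "p \<le> q" "p' \<le> q'" "p' \<le> q" "p \<le> q'"
  shows "card {j. Npat (p \<le> j-1 \<and> j-1 \<le> q) (p\<le>j \<and> j\<le>q) (p' \<le> j-1 \<and> j-1\<le>q') (p'\<le>j \<and> j\<le>q')}
    = ct (q' - q) + ct (p' - p)"
proof -
  let ?B = "(if p = p' then {p} else {min p p'..max p p' - 1})"
  let ?T = "(if q = q' then {q+1} else {min q q'+2..max q q'+1})"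
  have d: "?B \<inter> ?T = {}" using assms by auto
  have cB: "card ?B = ct (p' - p)" by (auto simp: ct_def)
  have cT: "card ?T = ct (q' - q)" by (auto simp: ct_def)
  show ?thesis unfolding NS_eq[OF assms]
    by (subst card_Un_disjoint) (use d cB cT in auto)
qed

lemma card_DS:
  fixes p q p' q' :: int
  assumes "p \<le> q" "p' \<le> q'" "p' \<le> q" "p \<le> q'"
  shows "card {j. Dpat (p \<le> j-1 \<and> j-1 \<le> q) (p\<le>j \<and> j\<le>q) (p' \<le> j-1 \<and> j-1\<le>q') (p'\<le>j \<and> j\<le>q')}
    = of_bool (q' \<noteq> q) + of_bool (p' \<noteq> p)"
proof -
  let ?B = "(if p = p' then {} else {max p p'})"
  let ?T = "(if q = q' then {} else {min q q'+1})"
  have d: "?B \<inter> ?T = {}" using assms by auto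
  show ?thesis unfolding DS_eq[OF assms]
    by (subst card_Un_disjoint) (use d in auto)
qed

lemma NS_left: "{j::int. Npat False False (p \<le> j-1 \<and> j-1 \<le> q) (p\<le>j \<and> j\<le>q)} = (if p \<le> q then {p..q+1} else {})"
  unfolding Npat_alt by (auto; smt)
lemma NS_right: "{j::int. Npat (p \<le> j-1 \<and> j-1 \<le> q) (p\<le>j \<and> j\<le>q) False False} = (if p \<le> q then {p..q+1} else {})"
  unfolding Npat_alt by (auto; smt)
lemma DS_left: "p \<le> q \<Longrightarrow> {j::int. Dpat False False (p \<le> j-1 \<and> j-1 \<le> q) (p\<le>j \<and> j\<le>q)} = {}"
  unfolding Dpat_alt by auto
lemma DS_right: "p \<le> q \<Longrightarrow> {j::int. Dpat (p \<le> j-1 \<and> j-1 \<le> q) (p\<le>j \<and> j\<le>q) False False} = {}"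
  unfolding Dpat_alt by auto

lemma card_by_fst:
  fixes S :: "(int \<times> int) set"
  assumes "finite S" "finite X" "fst ` S \<subseteq> X"
  shows "card S = (\<Sum>x\<in>X. card {j. (x, j) \<in> S})"
proof -
  have S: "S = (\<Union>x\<in>X. Pair x ` {j. (x, j) \<in> S})" using assms(3) by force
  have fin: "finite {j. (x, j) \<in> S}" for x
    using finite_imageI[OF assms(1), of snd] by (rule finite_subset[rotated]) force
  have "card S = (\<Sum>x\<in>X. card (Pair x ` {j. (x, j) \<in> S}))"
    by (subst S, rule card_UN_disjoint) (use assms fin in auto)
  also have "\<dots> = (\<Sum>x\<in>X. card {j. (x, j) \<in> S})"
    by (rule sum.cong) (auto intro: card_image inj_onI)
  finally show ?thesis .
qed

definition cellsf :: "nat \<Rightarrow> (nat \<Rightarrow> int) \<Rightarrow> (nat \<Rightarrow> int) \<Rightarrow> cell set" where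
  "cellsf w b t = {(int i, j) | i j. i < w \<and> b i \<le> j \<and> j \<le> t i}"

lemma mem_cellsf: "(x, j) \<in> cellsf w b t \<longleftrightarrow> 0 \<le> x \<and> x < int w \<and> b (nat x) \<le> j \<and> j \<le> t (nat x)"
  unfolding cellsf_def by force

lemma finite_cellsf: "finite (cellsf w b t)"
proof -
  have "cellsf w b t \<subseteq> (\<Union>i<w. (\<lambda>j. (int i, j)) ` {b i..t i})"
    unfolding cellsf_def by auto
  then show ?thesis by (rule finite_subset) auto
qed


definition validc :: "nat \<Rightarrow> (nat \<Rightarrow> int) \<Rightarrow> (nat \<Rightarrow> int) \<Rightarrow> bool" where
  "validc w b t \<longleftrightarrow> 1 \<le> w \<and> (\<forall>i<w. b i \<le> t i) \<and>
     (\<forall>k. Suc k < w \<longrightarrow> b (Suc k) \<le> t k \<and> b k \<le> t (Suc k))"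

lemma fst_NV_sub: "fst ` NV (cellsf w b t) \<subseteq> int ` {0..w}"
proof
  fix x assume "x \<in> fst ` NV (cellsf w b t)"
  then obtain j where "(x, j) \<in> NV (cellsf w b t)" by force
  then have "(x - 1, j - 1) \<in> cellsf w b t \<or> (x - 1, j) \<in> cellsf w b t \<or> (x, j - 1) \<in> cellsf w b t \<or> (x, j) \<in> cellsf w b t"
    unfolding NV_def Npat_def by auto
  then have "0 \<le> x \<and> x \<le> int w" unfolding mem_cellsf by auto
  then show "x \<in> int ` {0..w}" by (auto intro!: image_eqI[where x="nat x"])
qed

lemma fst_DV_sub: "fst ` DV (cellsf w b t) \<subseteq> int ` {0..w}"
proof
  fix x assume "x \<in> fst ` DV (cellsf w b t)"
  then obtain j where "(x, j) \<in> DV (cellsf w b t)" by force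
  then have "(x - 1, j - 1) \<in> cellsf w b t \<or> (x - 1, j) \<in> cellsf w b t \<or> (x, j - 1) \<in> cellsf w b t \<or> (x, j) \<in> cellsf w b t"
    unfolding DV_def Dpat_def by auto
  then have "0 \<le> x \<and> x \<le> int w" unfolding mem_cellsf by auto
  then show "x \<in> int ` {0..w}" by (auto intro!: image_eqI[where x="nat x"])
qed

lemma split_range:
  assumes "1 \<le> w"
  shows "(\<Sum>i\<in>{0..w}. f i) = f 0 + f w + (\<Sum>k<w-1. f (Suc k))"
proof -
  have "{0..w} = insert 0 (insert w (Suc ` {..<w-1}))" using assms
  proof (intro set_eqI iffI)
    fix i assume "i \<in> {0..w}"
    then show "i \<in> insert 0 (insert w (Suc ` {..<w-1}))"
      by (cases i) (auto simp: image_iff)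
  qed auto
  then have "(\<Sum>i\<in>{0..w}. f i) = (\<Sum>i\<in>insert 0 (insert w (Suc ` {..<w-1})). f i)" by simp
  also have "\<dots> = f 0 + f w + (\<Sum>i\<in>Suc ` {..<w-1}. f i)" using assms
    by (subst sum.insert, simp, force, subst sum.insert) (auto simp: add.assoc)
  also have "(\<Sum>i\<in>Suc ` {..<w-1}. f i) = (\<Sum>k<w-1. f (Suc k))" by (simp add: sum.reindex)
  finally show ?thesis .
qed

lemma sum_int_image: "(\<Sum>x\<in>int ` {0..w}. g x) = (\<Sum>i\<in>{0..w}. g (int i))"
  by (simp add: sum.reindex)

lemma N_formula:
  assumes v: "validc w b t"
  shows "d 2 (cellsf w b t) + d 3 (cellsf w b t) =
    nat (t 0 - b 0 + 2) + nat (t (w-1) - b (w-1) + 2) +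
    (\<Sum>k<w-1. ct (t (Suc k) - t k) + ct (b (Suc k) - b k))"
proof -
  let ?P = "cellsf w b t"
  let ?g = "\<lambda>x. card {j. (x, j) \<in> NV ?P}"
  have w1: "1 \<le> w" and bt: "\<And>i. i < w \<Longrightarrow> b i \<le> t i"
    and ov: "\<And>k. Suc k < w \<Longrightarrow> b (Suc k) \<le> t k \<and> b k \<le> t (Suc k)"
    using v unfolding validc_def by auto
  have "d 2 ?P + d 3 ?P = card (NV ?P)" by (rule d23_eq[OF finite_cellsf])
  also have "\<dots> = (\<Sum>x\<in>int ` {0..w}. ?g x)"
    by (rule card_by_fst[OF finite_NV[OF finite_cellsf] _ fst_NV_sub]) simp
  also have "\<dots> = (\<Sum>i\<in>{0..w}. ?g (int i))" by (rule sum_int_image)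
  also have "\<dots> = ?g (int 0) + ?g (int w) + (\<Sum>k<w-1. ?g (int (Suc k)))"
    by (rule split_range[OF w1])
  also have "?g (int 0) = nat (t 0 - b 0 + 2)"
  proof -
    have e: "{j. (int 0, j) \<in> NV ?P} = {j. Npat False False (b 0 \<le> j-1 \<and> j-1 \<le> t 0) (b 0\<le>j \<and> j\<le>t 0)}"
      using w1 unfolding NV_def mem_cellsf by auto
    show ?thesis unfolding e NS_left using bt[of 0] w1 by simp
  qed
  also have "?g (int w) = nat (t (w-1) - b (w-1) + 2)"
  proof -
    have e: "nat (int w - 1) = w - 1" using w1 by simp
    have "{j. (int w, j) \<in> NV ?P} = {j. Npat (b (w-1) \<le> j-1 \<and> j-1 \<le> t (w-1)) (b (w-1)\<le>j \<and> j\<le>t (w-1)) False False}"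
      using w1 unfolding NV_def mem_cellsf by (auto simp: e)
    then show ?thesis by (simp only: NS_right) (use bt[of "w-1"] w1 in simp)
  qed
  also have "(\<Sum>k<w-1. ?g (int (Suc k))) = (\<Sum>k<w-1. ct (t (Suc k) - t k) + ct (b (Suc k) - b k))"
  proof (rule sum.cong)
    fix k assume "k \<in> {..<w-1}"
    then have k: "Suc k < w" by auto
    have e: "nat (int (Suc k) - 1) = k" by simp
    have "{j. (int (Suc k), j) \<in> NV ?P} = {j. Npat (b k \<le> j-1 \<and> j-1 \<le> t k) (b k\<le>j \<and> j\<le>t k)
         (b (Suc k) \<le> j-1 \<and> j-1 \<le> t (Suc k)) (b (Suc k)\<le>j \<and> j\<le>t (Suc k))}"
      using k unfolding NV_def mem_cellsf by (auto simp: e simp del: of_nat_Suc)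
    then show "?g (int (Suc k)) = ct (t (Suc k) - t k) + ct (b (Suc k) - b k)"
      using card_NS[of "b k" "t k" "b (Suc k)" "t (Suc k)"] bt[of k] bt[of "Suc k"] ov[OF k] k by simp
  qed simp
  finally show ?thesis by simp
qed

lemma D_formula:
  assumes v: "validc w b t"
  shows "d 4 (cellsf w b t) = (\<Sum>k<w-1. of_bool (t (Suc k) \<noteq> t k) + of_bool (b (Suc k) \<noteq> b k))"
proof -
  let ?P = "cellsf w b t"
  let ?g = "\<lambda>x. card {j. (x, j) \<in> DV ?P}"
  have w1: "1 \<le> w" and bt: "\<And>i. i < w \<Longrightarrow> b i \<le> t i"
    and ov: "\<And>k. Suc k < w \<Longrightarrow> b (Suc k) \<le> t k \<and> b k \<le> t (Suc k)"
    using v unfolding validc_def by auto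
  have "d 4 ?P = card (DV ?P)" by (rule d4_eq)
  also have "\<dots> = (\<Sum>x\<in>int ` {0..w}. ?g x)"
    by (rule card_by_fst[OF finite_DV[OF finite_cellsf] _ fst_DV_sub]) simp
  also have "\<dots> = (\<Sum>i\<in>{0..w}. ?g (int i))" by (rule sum_int_image)
  also have "\<dots> = ?g (int 0) + ?g (int w) + (\<Sum>k<w-1. ?g (int (Suc k)))"
    by (rule split_range[OF w1])
  also have "?g (int 0) = 0"
  proof -
    have e: "{j. (int 0, j) \<in> DV ?P} = {j. Dpat False False (b 0 \<le> j-1 \<and> j-1 \<le> t 0) (b 0\<le>j \<and> j\<le>t 0)}"
      using w1 unfolding DV_def mem_cellsf by auto
    have h0: "b 0 \<le> t 0" using bt w1 by simp
    show ?thesis unfolding e DS_left[OF h0] by simp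
  qed
  also have "?g (int w) = 0"
  proof -
    have e: "nat (int w - 1) = w - 1" using w1 by simp
    have "{j. (int w, j) \<in> DV ?P} = {j. Dpat (b (w-1) \<le> j-1 \<and> j-1 \<le> t (w-1)) (b (w-1)\<le>j \<and> j\<le>t (w-1)) False False}"
      using w1 unfolding DV_def mem_cellsf by (auto simp: e)
    moreover have h0: "b (w-1) \<le> t (w-1)" using bt w1 by simp
    ultimately show ?thesis by (simp only: DS_right[OF h0]) simp
  qed
  also have "(\<Sum>k<w-1. ?g (int (Suc k))) = (\<Sum>k<w-1. of_bool (t (Suc k) \<noteq> t k) + of_bool (b (Suc k) \<noteq> b k))"
  proof (rule sum.cong)
    fix k assume "k \<in> {..<w-1}"
    then have k: "Suc k < w" by auto
    have e: "nat (int (Suc k) - 1) = k" by simp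
    have "{j. (int (Suc k), j) \<in> DV ?P} = {j. Dpat (b k \<le> j-1 \<and> j-1 \<le> t k) (b k\<le>j \<and> j\<le>t k)
         (b (Suc k) \<le> j-1 \<and> j-1 \<le> t (Suc k)) (b (Suc k)\<le>j \<and> j\<le>t (Suc k))}"
      using k unfolding DV_def mem_cellsf by (auto simp: e simp del: of_nat_Suc)
    then show "?g (int (Suc k)) = of_bool (t (Suc k) \<noteq> t k) + of_bool (b (Suc k) \<noteq> b k)"
      using card_DS[of "b k" "t k" "b (Suc k)" "t (Suc k)"] bt[of k] bt[of "Suc k"] ov[OF k] k by simp
  qed simp
  finally show ?thesis by simp
qed


definition topuni :: "nat \<Rightarrow> (nat \<Rightarrow> int) \<Rightarrow> bool" where
  "topuni w t \<longleftrightarrow> (\<forall>i j k. i \<le> j \<longrightarrow> j \<le> k \<longrightarrow> k < w \<longrightarrow> min (t i) (t k) \<le> t j)"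
definition botuni :: "nat \<Rightarrow> (nat \<Rightarrow> int) \<Rightarrow> bool" where
  "botuni w b \<longleftrightarrow> (\<forall>i j k. i \<le> j \<longrightarrow> j \<le> k \<longrightarrow> k < w \<longrightarrow> b j \<le> max (b i) (b k))"

lemma nat_1_plus_int [simp]: "nat (1 + int k) = Suc k" by simp

definition adjrel :: "cell set \<Rightarrow> (cell \<times> cell) set" where
  "adjrel P = {(a, b). a \<in> P \<and> b \<in> P \<and> edge_adj a b}"

lemma crossing:
  assumes "(c, dd) \<in> (adjrel P)\<^sup>*" "fst c \<le> x" "x < fst dd"
  shows "\<exists>y. (x, y) \<in> P \<and> (x + 1, y) \<in> P"
  using assms
proof (induction dd rule: rtrancl_induct)
  case base
  then show ?case by simp
next
  case (step e dd)
  show ?case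
  proof (cases "fst e \<le> x")
    case True
    from step.hyps(2) have "e \<in> P" "dd \<in> P" "\<bar>fst e - fst dd\<bar> + \<bar>snd e - snd dd\<bar> = 1"
      unfolding adjrel_def edge_adj_def by auto
    with True step.prems(2) have "fst e = x" "fst dd = x + 1" "snd e = snd dd" by auto
    then show ?thesis using \<open>e \<in> P\<close> \<open>dd \<in> P\<close> by (metis prod.collapse)
  next
    case False
    then show ?thesis using step by auto
  qed
qed

lemma ivt_up:
  fixes Q :: "nat \<Rightarrow> bool"
  assumes "Q i" "\<not> Q j" "i \<le> j"
  shows "\<exists>i'. i \<le> i' \<and> i' < j \<and> Q i' \<and> \<not> Q (Suc i')"
  using assms
proof (induction j)
  case 0
  then show ?case by auto
next
  case (Suc j)
  show ?case
  proof (cases "Q j")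
    case True
    then show ?thesis using Suc.prems by (intro exI[of _ j]) (auto simp: le_Suc_eq)
  next
    case False
    have "i \<le> j" using Suc.prems False by (metis le_SucE)
    with Suc.IH[OF Suc.prems(1) False] show ?thesis by auto
  qed
qed

lemma ivt_down:
  fixes Q :: "nat \<Rightarrow> bool"
  assumes "\<not> Q j" "Q k" "j \<le> k"
  shows "\<exists>k'. j \<le> k' \<and> k' < k \<and> \<not> Q k' \<and> Q (Suc k')"
  using ivt_up[of "\<lambda>i. \<not> Q i" j k] assms by auto

lemma cols_topuni:
  assumes P: "P = cellsf w b t" and v: "validc w b t"
    and rc: "\<forall>y x1 x2 x. (x1, y) \<in> P \<longrightarrow> (x2, y) \<in> P \<longrightarrow> x1 \<le> x \<longrightarrow> x \<le> x2 \<longrightarrow> (x, y) \<in> P"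
  shows "topuni w t"
  unfolding topuni_def
proof (intro allI impI, rule ccontr)
  fix i j k assume ij: "i \<le> j" and jk: "j \<le> k" and kw: "k < w" and c: "\<not> min (t i) (t k) \<le> t j"
  have bt: "\<And>i. i < w \<Longrightarrow> b i \<le> t i"
    and ov: "\<And>k. Suc k < w \<Longrightarrow> b (Suc k) \<le> t k \<and> b k \<le> t (Suc k)"
    using v unfolding validc_def by auto
  define r where "r = t j + 1"
  have ri: "r \<le> t i" and rk: "r \<le> t k" and rj: "\<not> r \<le> t j" using c r_def by auto
  obtain i' where i': "i \<le> i'" "i' < j" "r \<le> t i'" "\<not> r \<le> t (Suc i')"
    using ivt_up[of "\<lambda>x. r \<le> t x" i j, OF ri rj ij] by auto
  obtain k' where k': "j \<le> k'" "k' < k" "\<not> r \<le> t k'" "r \<le> t (Suc k')"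
    using ivt_down[of "\<lambda>x. r \<le> t x" j k, OF rj rk jk] by auto
  have "b i' \<le> t (Suc i')" using ov[of i'] i' jk kw by auto
  then have m1: "(int i', r) \<in> P" using i' jk kw unfolding P mem_cellsf by auto
  have "b (Suc k') \<le> t k'" using ov[of k'] k' kw by auto
  then have m2: "(int (Suc k'), r) \<in> P" using k' kw unfolding P mem_cellsf by auto
  have "(int j, r) \<in> P" using rc m1 m2 i' k' by (meson le_SucI of_nat_le_iff less_imp_le)
  then have "r \<le> t j" unfolding P mem_cellsf by simp
  then show False using r_def by simp
qed

lemma cols_botuni:
  assumes P: "P = cellsf w b t" and v: "validc w b t"
    and rc: "\<forall>y x1 x2 x. (x1, y) \<in> P \<longrightarrow> (x2, y) \<in> P \<longrightarrow> x1 \<le> x \<longrightarrow> x \<le> x2 \<longrightarrow> (x, y) \<in> P"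
  shows "botuni w b"
  unfolding botuni_def
proof (intro allI impI, rule ccontr)
  fix i j k assume ij: "i \<le> j" and jk: "j \<le> k" and kw: "k < w" and c: "\<not> b j \<le> max (b i) (b k)"
  have bt: "\<And>i. i < w \<Longrightarrow> b i \<le> t i"
    and ov: "\<And>k. Suc k < w \<Longrightarrow> b (Suc k) \<le> t k \<and> b k \<le> t (Suc k)"
    using v unfolding validc_def by auto
  define r where "r = b j - 1"
  have ri: "b i \<le> r" and rk: "b k \<le> r" and rj: "\<not> b j \<le> r" using c r_def by auto
  obtain i' where i': "i \<le> i'" "i' < j" "b i' \<le> r" "\<not> b (Suc i') \<le> r"
    using ivt_up[of "\<lambda>x. b x \<le> r" i j, OF ri rj ij] by auto
  obtain k' where k': "j \<le> k'" "k' < k" "\<not> b k' \<le> r" "b (Suc k') \<le> r"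
    using ivt_down[of "\<lambda>x. b x \<le> r" j k, OF rj rk jk] by auto
  have "b (Suc i') \<le> t i'" using ov[of i'] i' jk kw by auto
  then have m1: "(int i', r) \<in> P" using i' jk kw unfolding P mem_cellsf by auto
  have "b k' \<le> t (Suc k')" using ov[of k'] k' kw by auto
  then have m2: "(int (Suc k'), r) \<in> P" using k' kw unfolding P mem_cellsf by auto
  have "(int j, r) \<in> P" using rc m1 m2 i' k' by (meson le_SucI of_nat_le_iff less_imp_le)
  then have "b j \<le> r" unfolding P mem_cellsf by simp
  then show False using r_def by simp
qed


lemma convex_cols:
  assumes cp: "convex_polyomino P" and nz: "normalized P"
  shows "\<exists>w b t. P = cellsf w b t \<and> validc w b t \<and> (\<forall>i<w. 0 \<le> b i) \<and> (\<exists>i<w. b i = 0) \<and>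
     topuni w t \<and> botuni w b"
proof -
  have fin: "finite P" and ne: "P \<noteq> {}" and conn: "\<And>c e. c \<in> P \<Longrightarrow> e \<in> P \<Longrightarrow> (c, e) \<in> (adjrel P)\<^sup>*"
    using cp unfolding convex_polyomino_def polyomino_def adjrel_def by auto
  have rc: "\<forall>y x1 x2 x. (x1, y) \<in> P \<longrightarrow> (x2, y) \<in> P \<longrightarrow> x1 \<le> x \<longrightarrow> x \<le> x2 \<longrightarrow> (x, y) \<in> P"
   and cc: "\<And>x y1 y2 y. (x, y1) \<in> P \<Longrightarrow> (x, y2) \<in> P \<Longrightarrow> y1 \<le> y \<Longrightarrow> y \<le> y2 \<Longrightarrow> (x, y) \<in> P"
    using cp unfolding convex_polyomino_def by blast+
  have pos: "\<And>c. c \<in> P \<Longrightarrow> 0 \<le> fst c \<and> 0 \<le> snd c" using nz unfolding normalized_def by auto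
  obtain c0 where c0: "c0 \<in> P" "fst c0 = 0" using nz unfolding normalized_def by auto
  obtain cz where cz: "cz \<in> P" "snd cz = 0" using nz unfolding normalized_def by auto
  define M where "M = Max (fst ` P)"
  have finf: "finite (fst ` P)" using fin by simp
  have "M \<in> fst ` P" using Max_in[OF finf] ne unfolding M_def by auto
  then obtain cM where cM: "cM \<in> P" "fst cM = M" by force
  have leM: "\<And>c. c \<in> P \<Longrightarrow> fst c \<le> M" unfolding M_def using finf by auto
  have M0: "0 \<le> M" using pos[OF cM(1)] cM by simp
  define w where "w = Suc (nat M)"
  define col where "col i = {j. (int i, j) \<in> P}" for i
  have colfin: "finite (col i)" for i
  proof -
    have "col i \<subseteq> snd ` P" unfolding col_def by force
    then show ?thesis using fin finite_subset by blast
  qed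
  have colne: "col i \<noteq> {}" if "i < w" for i
  proof -
    have iM: "int i \<le> M" using that M0 unfolding w_def by linarith
    show ?thesis
    proof (cases "int i = M")
      case True
      then have "(int i, snd cM) \<in> P" using cM by (metis prod.collapse)
      then show ?thesis unfolding col_def by auto
    next
      case False
      then have "int i < M" using iM by simp
      then obtain y where "(int i, y) \<in> P" using crossing[OF conn[OF c0(1) cM(1)], of "int i"] c0 cM by auto
      then show ?thesis unfolding col_def by auto
    qed
  qed
  define b where "b i = Min (col i)" for i
  define t where "t i = Max (col i)" for i
  have bin: "b i \<in> col i" and tin: "t i \<in> col i" if "i < w" for i
    unfolding b_def t_def using colfin colne[OF that] by auto
  have ble: "b i \<le> j" and tge: "j \<le> t i" if "j \<in> col i" for i j
    unfolding b_def t_def using colfin that by auto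
  have Peq: "P = cellsf w b t"
  proof (rule set_eqI)
    fix c :: cell
    obtain x j where c: "c = (x, j)" by force
    show "c \<in> P \<longleftrightarrow> c \<in> cellsf w b t"
    proof
      assume "c \<in> P"
      then have x0: "0 \<le> x" and xM: "x \<le> M" using pos leM c by force+
      then have xw: "nat x < w" unfolding w_def by linarith
      have "j \<in> col (nat x)" unfolding col_def using \<open>c \<in> P\<close> c x0 by simp
      then show "c \<in> cellsf w b t" unfolding c mem_cellsf using x0 xw ble tge by force
    next
      assume "c \<in> cellsf w b t"
      then have x0: "0 \<le> x" and xw: "x < int w" and j: "b (nat x) \<le> j" "j \<le> t (nat x)"
        unfolding c mem_cellsf by auto
      have nw: "nat x < w" using xw x0 by linarith
      have "(x, b (nat x)) \<in> P" "(x, t (nat x)) \<in> P"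
        using bin[OF nw] tin[OF nw] x0 unfolding col_def by auto
      then show "c \<in> P" unfolding c using cc j by blast
    qed
  qed
  have bt: "b i \<le> t i" if "i < w" for i using ble[OF tin[OF that]] .
  have ov: "b (Suc k) \<le> t k \<and> b k \<le> t (Suc k)" if sk: "Suc k < w" for k
  proof -
    obtain j1 where j1: "(int k, j1) \<in> P" using colne[of k] sk unfolding col_def by force
    obtain j2 where j2: "(int (Suc k), j2) \<in> P" using colne[of "Suc k"] sk unfolding col_def by force
    obtain y where y: "(int k, y) \<in> P" "(int k + 1, y) \<in> P"
      using crossing[OF conn[OF j1 j2], of "int k"] by auto
    have "y \<in> col k" "y \<in> col (Suc k)" using y unfolding col_def by (auto simp: add.commute)
    then show ?thesis using ble tge by (meson order_trans)
  qed
  have valid: "validc w b t" unfolding validc_def w_def using bt ov w_def by auto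
  have bpos: "0 \<le> b i" if "i < w" for i using bin[OF that] pos unfolding col_def by force
  have bz: "\<exists>i<w. b i = 0"
  proof -
    obtain x where x: "cz = (x, 0)" using cz by (metis prod.collapse)
    have x0: "0 \<le> x" and xM: "x \<le> M" using pos leM cz x by force+
    then have nw: "nat x < w" unfolding w_def by linarith
    have "0 \<in> col (nat x)" unfolding col_def using cz x x0 by simp
    then have "b (nat x) \<le> 0" using ble by blast
    then show ?thesis using bpos[OF nw] nw by (intro exI[of _ "nat x"]) auto
  qed
  show ?thesis
    using Peq valid bpos bz cols_topuni[OF Peq valid rc] cols_botuni[OF Peq valid rc] by blast
qed


lemma adjrel_sym: "(adjrel P)\<inverse> = adjrel P"
  unfolding adjrel_def edge_adj_def by (auto simp: abs_minus_commute)

lemma rtr_sym: "(a, c) \<in> (adjrel P)\<^sup>* \<Longrightarrow> (c, a) \<in> (adjrel P)\<^sup>*"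
  by (metis adjrel_sym rtrancl_converseI)

lemma vert_path:
  assumes "\<And>y. j \<le> y \<Longrightarrow> y \<le> j' \<Longrightarrow> (x, y) \<in> P" "j \<le> j'"
  shows "((x, j), (x, j')) \<in> (adjrel P)\<^sup>*"
proof -
  have "\<forall>j'. j \<le> j' \<longrightarrow> nat (j' - j) = n \<longrightarrow> (\<forall>y. j \<le> y \<longrightarrow> y \<le> j' \<longrightarrow> (x, y) \<in> P) \<longrightarrow>
      ((x, j), (x, j')) \<in> (adjrel P)\<^sup>*" for n
  proof (induction n)
    case 0
    then show ?case by auto
  next
    case (Suc n)
    show ?case
    proof (intro allI impI)
      fix j' assume h: "j \<le> j'" "nat (j' - j) = Suc n" "\<forall>y. j \<le> y \<longrightarrow> y \<le> j' \<longrightarrow> (x, y) \<in> P"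
      have "((x, j), (x, j' - 1)) \<in> (adjrel P)\<^sup>*" using Suc.IH h by auto
      moreover have "((x, j' - 1), (x, j')) \<in> adjrel P"
        using h unfolding adjrel_def edge_adj_def by auto
      ultimately show "((x, j), (x, j')) \<in> (adjrel P)\<^sup>*" by (rule rtrancl_into_rtrancl)
    qed
  qed
  then show ?thesis using assms by blast
qed

lemma cellsf_connected:
  assumes v: "validc w b t"
  shows "\<forall>i<w. \<forall>j. b i \<le> j \<longrightarrow> j \<le> t i \<longrightarrow> ((0, b 0), (int i, j)) \<in> (adjrel (cellsf w b t))\<^sup>*"
proof -
  let ?P = "cellsf w b t"
  have w1: "1 \<le> w" and bt: "\<And>i. i < w \<Longrightarrow> b i \<le> t i"
    and ov: "\<And>k. Suc k < w \<Longrightarrow> b (Suc k) \<le> t k \<and> b k \<le> t (Suc k)"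
    using v unfolding validc_def by auto
  have vp: "((int i, j), (int i, j')) \<in> (adjrel ?P)\<^sup>*" if "i < w" "b i \<le> j" "j \<le> j'" "j' \<le> t i" for i j j'
    by (rule vert_path) (use that in \<open>auto simp: mem_cellsf\<close>)
  show ?thesis
  proof (intro allI impI)
    fix i j assume "i < w" "b i \<le> j" "j \<le> t i"
    then show "((0, b 0), (int i, j)) \<in> (adjrel ?P)\<^sup>*"
    proof (induction i arbitrary: j)
      case 0
      then show ?case using vp[of 0 "b 0" j] by simp
    next
      case (Suc k)
      define y where "y = max (b k) (b (Suc k))"
      have k: "k < w" using Suc by simp
      have y1: "b k \<le> y" "y \<le> t k" "b (Suc k) \<le> y" "y \<le> t (Suc k)"
        using ov[OF Suc.prems(1)] bt[OF k] bt[OF Suc.prems(1)] unfolding y_def by auto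
      have "((0, b 0), (int k, y)) \<in> (adjrel ?P)\<^sup>*" using Suc.IH[OF k y1(1,2)] .
      moreover have "((int k, y), (int (Suc k), y)) \<in> adjrel ?P"
        using y1 k Suc.prems(1) unfolding adjrel_def edge_adj_def by (auto simp: mem_cellsf)
      moreover have "((int (Suc k), y), (int (Suc k), j)) \<in> (adjrel ?P)\<^sup>*"
      proof (cases "y \<le> j")
        case True
        then show ?thesis using vp[OF Suc.prems(1) y1(3) True Suc.prems(3)] by simp
      next
        case False
        then show ?thesis using vp[OF Suc.prems(1) Suc.prems(2), of y] y1 rtr_sym by auto
      qed
      ultimately show ?case by (meson rtrancl_into_rtrancl rtrancl_trans)
    qed
  qed
qed

lemma cellsf_convex:
  assumes v: "validc w b t" and tu: "topuni w t" and bu: "botuni w b"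
  shows "convex_polyomino (cellsf w b t)"
proof -
  let ?P = "cellsf w b t"
  have w1: "1 \<le> w" and bt: "\<And>i. i < w \<Longrightarrow> b i \<le> t i"
    using v unfolding validc_def by auto
  have "(0, b 0) \<in> ?P" using bt[of 0] w1 by (auto simp: mem_cellsf)
  then have ne: "?P \<noteq> {}" by auto
  have conn: "(c, e) \<in> (adjrel ?P)\<^sup>*" if "c \<in> ?P" "e \<in> ?P" for c e
  proof -
    have "\<forall>c\<in>?P. ((0, b 0), c) \<in> (adjrel ?P)\<^sup>*"
      using cellsf_connected[OF v] unfolding cellsf_def by auto
    then show ?thesis using that rtr_sym by (meson rtrancl_trans)
  qed
  have rc: "(x, y) \<in> ?P" if "(x1, y) \<in> ?P" "(x2, y) \<in> ?P" "x1 \<le> x" "x \<le> x2" for y x1 x2 x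
  proof -
    have h1: "0 \<le> x1" "x2 < int w" "b (nat x1) \<le> y" "y \<le> t (nat x1)" "b (nat x2) \<le> y" "y \<le> t (nat x2)"
      using that unfolding mem_cellsf by auto
    have i: "nat x1 \<le> nat x" "nat x \<le> nat x2" "nat x2 < w" using that h1 by auto
    have "min (t (nat x1)) (t (nat x2)) \<le> t (nat x)" using tu i unfolding topuni_def by blast
    moreover have "b (nat x) \<le> max (b (nat x1)) (b (nat x2))" using bu i unfolding botuni_def by blast
    ultimately have "b (nat x) \<le> y" "y \<le> t (nat x)" using h1 by linarith+
    then show ?thesis using h1 that unfolding mem_cellsf by auto
  qed
  have cc: "(x, y) \<in> ?P" if "(x, y1) \<in> ?P" "(x, y2) \<in> ?P" "y1 \<le> y" "y \<le> y2" for x y1 y2 y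
    using that unfolding mem_cellsf by auto
  show ?thesis unfolding convex_polyomino_def polyomino_def
    using finite_cellsf ne conn rc cc unfolding adjrel_def by blast
qed

lemma cellsf_normalized:
  assumes v: "validc w b t" and "\<forall>i<w. 0 \<le> b i" "\<exists>i<w. b i = 0"
  shows "normalized (cellsf w b t)"
proof -
  have w1: "1 \<le> w" and bt: "\<And>i. i < w \<Longrightarrow> b i \<le> t i"
    using v unfolding validc_def by auto
  obtain i where i: "i < w" "b i = 0" using assms by auto
  have "(int i, 0) \<in> cellsf w b t" using i bt[OF i(1)] by (simp add: mem_cellsf)
  moreover have "(0, b 0) \<in> cellsf w b t" using w1 bt[of 0] by (simp add: mem_cellsf)
  moreover have "\<forall>c\<in>cellsf w b t. 0 \<le> fst c \<and> 0 \<le> snd c"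
    using assms(2) unfolding cellsf_def by force
  ultimately show ?thesis unfolding normalized_def by force
qed


definition lists_of :: "nat \<Rightarrow> 'a set \<Rightarrow> 'a list set" where
  "lists_of m S = {l. length l = m \<and> set l \<subseteq> S}"

lemma lists_of_Suc: "lists_of (Suc m) S = (\<lambda>(a, l). a # l) ` (S \<times> lists_of m S)"
  unfolding lists_of_def by (auto simp: length_Suc_conv image_iff)

lemma finite_lists_of: "finite S \<Longrightarrow> finite (lists_of m S)"
  by (induction m) (auto simp: lists_of_Suc, simp add: lists_of_def)

lemma sum_lists_of:
  fixes f :: "'a \<Rightarrow> real"
  assumes "finite S"
  shows "(\<Sum>l\<in>lists_of m S. prod_list (map f l)) = (\<Sum>a\<in>S. f a) ^ m"
proof (induction m)
  case 0
  have "lists_of 0 S = {[]}" unfolding lists_of_def by auto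
  then show ?case by simp
next
  case (Suc m)
  have inj: "inj_on (\<lambda>(a, l). a # l) (S \<times> lists_of m S)" by (auto simp: inj_on_def)
  have "(\<Sum>l\<in>lists_of (Suc m) S. prod_list (map f l)) =
      (\<Sum>z\<in>S \<times> lists_of m S. prod_list (map f ((\<lambda>(a, l). a # l) z)))"
    unfolding lists_of_Suc by (rule sum.reindex[OF inj, unfolded comp_def])
  also have "\<dots> = (\<Sum>a\<in>S. \<Sum>l\<in>lists_of m S. f a * prod_list (map f l))"
    by (simp only: sum.cartesian_product) (rule sum.cong, auto)
  also have "\<dots> = (\<Sum>a\<in>S. f a) * (\<Sum>l\<in>lists_of m S. prod_list (map f l))"
    by (rule sum_product[symmetric])
  finally show ?case using Suc.IH by simp
qed

definition SU :: "int \<Rightarrow> int \<Rightarrow> nat \<Rightarrow> int list set" where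
  "SU s n m = {l. length l = m \<and> (\<forall>x\<in>set l. \<bar>x\<bar> \<le> n) \<and>
     (\<exists>p\<le>m. (\<forall>k<p. 0 \<le> s * l ! k) \<and> (\<forall>k. p \<le> k \<longrightarrow> k < m \<longrightarrow> s * l ! k \<le> 0))}"

lemma SU_sub: "SU s n m \<subseteq> (\<Union>p\<in>{..m}. (\<lambda>(l1, l2). l1 @ l2) `
     (lists_of p {x. \<bar>x\<bar> \<le> n \<and> 0 \<le> s * x} \<times> lists_of (m - p) {x. \<bar>x\<bar> \<le> n \<and> s * x \<le> 0}))"
proof
  fix l assume "l \<in> SU s n m"
  then obtain p where l: "length l = m" "\<forall>x\<in>set l. \<bar>x\<bar> \<le> n" "p \<le> m" "\<forall>k<p. 0 \<le> s * l ! k"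
      "\<forall>k. p \<le> k \<longrightarrow> k < m \<longrightarrow> s * l ! k \<le> 0"
    unfolding SU_def by auto
  have "take p l \<in> lists_of p {x. \<bar>x\<bar> \<le> n \<and> 0 \<le> s * x}"
    using l unfolding lists_of_def by (auto simp: in_set_conv_nth dest: in_set_takeD)
  moreover have "drop p l \<in> lists_of (m - p) {x. \<bar>x\<bar> \<le> n \<and> s * x \<le> 0}"
    using l unfolding lists_of_def by (auto simp: in_set_conv_nth dest: in_set_dropD)
  ultimately show "l \<in> (\<Union>p\<in>{..m}. (\<lambda>(l1, l2). l1 @ l2) `
     (lists_of p {x. \<bar>x\<bar> \<le> n \<and> 0 \<le> s * x} \<times> lists_of (m - p) {x. \<bar>x\<bar> \<le> n \<and> s * x \<le> 0}))"
    using l(3) by (auto intro!: bexI[of _ p] image_eqI[of _ _ "(take p l, drop p l)"])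
qed

lemma sum_UN_le_nonneg:
  fixes f :: "'a \<Rightarrow> real"
  assumes "finite I" "\<And>i. i \<in> I \<Longrightarrow> finite (A i)" "\<And>x. f x \<ge> 0"
  shows "sum f (\<Union>i\<in>I. A i) \<le> (\<Sum>i\<in>I. sum f (A i))"
  using assms
proof (induction I rule: finite_induct)
  case empty
  then show ?case by simp
next
  case (insert i I)
  have "sum f (\<Union>j\<in>insert i I. A j) = sum f (A i \<union> (\<Union>j\<in>I. A j))" by simp
  also have "\<dots> \<le> sum f (A i) + sum f (\<Union>j\<in>I. A j)"
  proof -
    have fa: "finite (A i)" "finite (\<Union>j\<in>I. A j)" using insert by auto
    have "sum f (A i \<union> (\<Union>j\<in>I. A j)) = sum f (A i) + sum f (\<Union>j\<in>I. A j) - sum f (A i \<inter> (\<Union>j\<in>I. A j))"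
      by (rule sum_Un[OF fa])
    moreover have "0 \<le> sum f (A i \<inter> (\<Union>j\<in>I. A j))" by (rule sum_nonneg) (use insert in auto)
    ultimately show ?thesis by simp
  qed
  also have "\<dots> \<le> sum f (A i) + (\<Sum>j\<in>I. sum f (A j))" using insert by auto
  finally show ?case using insert by simp
qed

lemma sum_SU_le:
  fixes f :: "int \<Rightarrow> real"
  assumes f0: "\<And>x. 0 \<le> f x"
    and g1: "(\<Sum>x\<in>{x. \<bar>x\<bar> \<le> n \<and> 0 \<le> s * x}. f x) \<le> 1"
    and g2: "(\<Sum>x\<in>{x. \<bar>x\<bar> \<le> n \<and> s * x \<le> 0}. f x) \<le> 1"
  shows "(\<Sum>l\<in>SU s n m. prod_list (map f l)) \<le> real m + 1"
proof -
  let ?A = "{x. \<bar>x\<bar> \<le> n \<and> 0 \<le> s * x}" and ?B = "{x. \<bar>x\<bar> \<le> n \<and> s * x \<le> 0}"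
  have fA: "finite ?A" by (rule finite_subset[of _ "{-n..n}"]) auto
  have fB: "finite ?B" by (rule finite_subset[of _ "{-n..n}"]) auto
  let ?F = "\<lambda>l. prod_list (map f l)"
  have F0: "0 \<le> ?F l" for l by (induction l) (auto simp: f0)
  let ?U = "\<Union>p\<in>{..m}. (\<lambda>(l1, l2). l1 @ l2) ` (lists_of p ?A \<times> lists_of (m - p) ?B)"
  have finU: "finite ?U" using finite_lists_of[OF fA] finite_lists_of[OF fB] by auto
  have "(\<Sum>l\<in>SU s n m. ?F l) \<le> (\<Sum>l\<in>?U. ?F l)"
    by (rule sum_mono2[OF finU SU_sub]) (use F0 in auto)
  also have "\<dots> \<le> (\<Sum>p\<in>{..m}. \<Sum>l\<in>(\<lambda>(l1, l2). l1 @ l2) ` (lists_of p ?A \<times> lists_of (m - p) ?B). ?F l)"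
    by (rule sum_UN_le_nonneg) (use F0 finite_lists_of[OF fA] finite_lists_of[OF fB] in auto)
  also have "\<dots> \<le> (\<Sum>p\<in>{..m}. 1)"
  proof (rule sum_mono)
    fix p assume "p \<in> {..m}"
    have "(\<Sum>l\<in>(\<lambda>(l1, l2). l1 @ l2) ` (lists_of p ?A \<times> lists_of (m - p) ?B). ?F l)
        \<le> (\<Sum>z\<in>lists_of p ?A \<times> lists_of (m - p) ?B. ?F ((\<lambda>(l1, l2). l1 @ l2) z))"
      using sum_image_le[of "lists_of p ?A \<times> lists_of (m - p) ?B" ?F "(\<lambda>(l1, l2). l1 @ l2)"]
        F0 finite_lists_of[OF fA] finite_lists_of[OF fB] by (simp add: comp_def)
    also have "\<dots> = (\<Sum>l1\<in>lists_of p ?A. \<Sum>l2\<in>lists_of (m - p) ?B. ?F l1 * ?F l2)"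
      by (simp only: sum.cartesian_product) (rule sum.cong, auto)
    also have "\<dots> = (\<Sum>l1\<in>lists_of p ?A. ?F l1) * (\<Sum>l2\<in>lists_of (m - p) ?B. ?F l2)"
      by (rule sum_product[symmetric])
    also have "\<dots> = (\<Sum>x\<in>?A. f x) ^ p * (\<Sum>x\<in>?B. f x) ^ (m - p)"
      by (simp add: sum_lists_of fA fB)
    also have "\<dots> \<le> 1 * 1"
      by (rule mult_mono) (auto intro!: power_le_one sum_nonneg f0 zero_le_power simp: g1 g2)
    finally show "(\<Sum>l\<in>(\<lambda>(l1, l2). l1 @ l2) ` (lists_of p ?A \<times> lists_of (m - p) ?B). ?F l) \<le> 1" by simp
  qed
  also have "\<dots> = real m + 1" by simp
  finally show ?thesis .
qed


definition wg :: "real \<Rightarrow> real \<Rightarrow> int \<Rightarrow> real" where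
  "wg x y z = x ^ ct z * y ^ (if z = 0 then 0 else 1)"

lemma wg_nonneg: "0 \<le> x \<Longrightarrow> 0 \<le> y \<Longrightarrow> 0 \<le> wg x y z"
  unfolding wg_def by simp

lemma wg_neg: "wg x y (- z) = wg x y z"
  unfolding wg_def ct_def by simp

lemma geom_le: fixes x :: real assumes "0 \<le> x" "x < 1"
  shows "(\<Sum>k\<in>{1..n}. x ^ k) \<le> x / (1 - x)"
proof -
  have "(\<Sum>k\<in>{1..n}. x ^ k) = (\<Sum>k<n. x ^ Suc k)"
    using sum.atLeast1_atMost_eq[of "\<lambda>k. x ^ k" n] by simp
  also have "\<dots> = x * (\<Sum>k<n. x ^ k)" by (simp add: sum_distrib_left)
  also have "(\<Sum>k<n. x ^ k) = (1 - x ^ n) / (1 - x)" using assms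
    by (simp add: geometric_sum[of x n]) (metis minus_divide_divide minus_diff_eq)
  also have "x * ((1 - x ^ n) / (1 - x)) \<le> x / (1 - x)"
  proof -
    have "0 \<le> x * x ^ n" using assms by simp
    then have "x * (1 - x ^ n) \<le> x" by (simp add: algebra_simps)
    then show ?thesis using assms by (simp add: divide_right_mono)
  qed
  finally show ?thesis by simp
qed

lemma sum_wg_pos:
  assumes x: "0 < x" "x < 1" and y: "0 < y" and g: "x + y * x / (1 - x) \<le> 1"
  shows "(\<Sum>z\<in>{0..n}. wg x y z) \<le> 1"
proof (cases "n < 0")
  case True
  then show ?thesis by simp
next
  case False
  have "{0..n} = insert 0 {1..n}" using False by auto
  then have "(\<Sum>z\<in>{0..n}. wg x y z) = wg x y 0 + (\<Sum>z\<in>{1..n}. wg x y z)" by simp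
  also have "(\<Sum>z\<in>{1..n}. wg x y z) = (\<Sum>k\<in>{1..nat n}. y * x ^ k)"
  proof -
    have "{1..n} = int ` {1..nat n}" using False by (simp add: image_int_atLeastAtMost)
    moreover have "wg x y (int k) = y * x ^ k" if "k \<in> {1..nat n}" for k using that unfolding wg_def ct_def by auto
    ultimately show ?thesis by (simp add: sum.reindex)
  qed
  also have "\<dots> = y * (\<Sum>k\<in>{1..nat n}. x ^ k)" by (simp add: sum_distrib_left)
  also have "\<dots> \<le> y * (x / (1 - x))" using geom_le[of x "nat n"] x y by (intro mult_left_mono) auto
  also have "wg x y 0 = x" unfolding wg_def ct_def by simp
  finally show ?thesis using g by simp
qed

lemma sum_wg_le1:
  assumes x: "0 < x" "x < 1" and y: "0 < y" and g: "x + y * x / (1 - x) \<le> 1" and s: "s = 1 \<or> s = -1"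
  shows "(\<Sum>z\<in>{z. \<bar>z\<bar> \<le> n \<and> 0 \<le> s * z}. wg x y z) \<le> 1"
    and "(\<Sum>z\<in>{z. \<bar>z\<bar> \<le> n \<and> s * z \<le> 0}. wg x y z) \<le> 1"
proof -
  have pos: "{z. \<bar>z\<bar> \<le> n \<and> 0 \<le> z} = {0..n}" by auto
  have neg: "{z. \<bar>z\<bar> \<le> n \<and> z \<le> 0} = uminus ` {0..n}"
  proof (intro set_eqI iffI)
    fix z assume "z \<in> {z. \<bar>z\<bar> \<le> n \<and> z \<le> 0}"
    then show "z \<in> uminus ` {0..n}" by (intro image_eqI[of _ _ "- z"]) auto
  qed auto
  have sneg: "(\<Sum>z\<in>uminus ` {0..n}. wg x y z) = (\<Sum>z\<in>{0..n}. wg x y z)"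
    by (subst sum.reindex) (auto simp: wg_neg inj_on_def)
  show "(\<Sum>z\<in>{z. \<bar>z\<bar> \<le> n \<and> 0 \<le> s * z}. wg x y z) \<le> 1"
    using s sum_wg_pos[OF x y g, of n] pos neg sneg by (auto simp: neg_0_le_iff_le)
  show "(\<Sum>z\<in>{z. \<bar>z\<bar> \<le> n \<and> s * z \<le> 0}. wg x y z) \<le> 1"
    using s sum_wg_pos[OF x y g, of n] pos neg sneg by (auto simp: neg_le_0_iff_le)
qed


lemma prod_list_upt: "prod_list (map f [0..<m]) = (\<Prod>k<m. f k)"
  by (induction m) (auto simp: lessThan_Suc mult.commute)

lemma sum_list_upt: "sum_list (map f [0..<m]) = (\<Sum>k<m. f k)"
  by (induction m) (auto simp: lessThan_Suc add.commute)

lemma topuni_SU: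
  assumes tu: "topuni w t"
  shows "\<exists>p\<le>w-1. (\<forall>k<p. 0 \<le> t (Suc k) - t k) \<and> (\<forall>k. p \<le> k \<longrightarrow> k < w-1 \<longrightarrow> t (Suc k) - t k \<le> 0)"
proof (cases "\<forall>k<w-1. 0 \<le> t (Suc k) - t k")
  case True
  then show ?thesis by (intro exI[of _ "w-1"]) auto
next
  case False
  define p where "p = (LEAST k. k < w-1 \<and> t (Suc k) - t k < 0)"
  have ex: "\<exists>k. k < w-1 \<and> t (Suc k) - t k < 0" using False by auto
  have pp: "p < w-1" "t (Suc p) - t p < 0" using LeastI_ex[OF ex] unfolding p_def by auto
  have before: "0 \<le> t (Suc k) - t k" if "k < p" for k
    using not_less_Least[of k "\<lambda>k. k < w-1 \<and> t (Suc k) - t k < 0"] that pp unfolding p_def[symmetric] by auto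
  have after: "t (Suc k) - t k \<le> 0" if "p \<le> k" "k < w-1" for k
  proof (rule ccontr)
    assume c: "\<not> t (Suc k) - t k \<le> 0"
    then have "p \<noteq> k" using pp by auto
    then have pk: "p < k" using that by auto
    show False
    proof (cases "t (Suc p) < t (Suc k)")
      case True
      have "min (t p) (t (Suc k)) \<le> t (Suc p)" using tu pk that unfolding topuni_def by auto
      then show False using True pp by auto
    next
      case False
      have "min (t p) (t (Suc k)) \<le> t k" using tu pk that unfolding topuni_def by auto
      then show False using False pp c by auto
    qed
  qed
  show ?thesis using pp before after by (intro exI[of _ p]) auto
qed

lemma botuni_topuni: "botuni w b \<Longrightarrow> topuni w (\<lambda>i. - b i)"
  unfolding botuni_def topuni_def by (simp add: min_def max_def) (smt (verit))

definition rb :: "int \<times> int \<times> int list \<times> int list \<Rightarrow> cell set" where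
  "rb dat = (case dat of (b0, t0, lt, lb) \<Rightarrow>
     cellsf (Suc (length lt)) (\<lambda>i. b0 + sum_list (take i lb)) (\<lambda>i. t0 + sum_list (take i lt)))"

definition LL :: "nat \<Rightarrow> (int list \<times> int list) set" where
  "LL n = {(lt, lb). length lt = length lb \<and> length lt \<le> n \<and>
      lt \<in> SU 1 (int n) (length lt) \<and> lb \<in> SU (-1) (int n) (length lb)}"

definition Dset :: "nat \<Rightarrow> (int \<times> int \<times> int list \<times> int list) set" where
  "Dset n = {0..2 * int n} \<times> {0..2 * int n} \<times> LL n"

definition wll :: "real \<Rightarrow> real \<Rightarrow> int list \<times> int list \<Rightarrow> real" where
  "wll x y ll = prod_list (map (wg x y) (fst ll)) * prod_list (map (wg x y) (snd ll))"

lemma cellsf_cong: "(\<And>i. i < w \<Longrightarrow> b i = b' i \<and> t i = t' i) \<Longrightarrow> cellsf w b t = cellsf w b' t'"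
  unfolding cellsf_def by force

lemma take_diffs:
  assumes "i \<le> m"
  shows "sum_list (take i (map (\<lambda>k. f (Suc k) - f k) [0..<m])) = f i - (f 0 :: int)"
proof -
  have "take i (map (\<lambda>k. f (Suc k) - f k) [0..<m]) = map (\<lambda>k. f (Suc k) - f k) [0..<i]"
    using assms by (simp add: take_map min_absorb1)
  then show ?thesis by (simp add: sum_list_upt sum_lessThan_telescope)
qed

lemma SU_memI:
  assumes "\<forall>k<m. \<bar>f k\<bar> \<le> n"
    and "\<exists>p\<le>m. (\<forall>k<p. 0 \<le> s * f k) \<and> (\<forall>k. p \<le> k \<longrightarrow> k < m \<longrightarrow> s * f k \<le> 0)"
  shows "map f [0..<m] \<in> SU s n m"
  using assms unfolding SU_def by (auto simp: in_set_conv_nth)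

lemma enc_exists:
  assumes P: "P \<in> convex_polys_n n" and x: "0 < x" "x \<le> 1" and y: "0 < y"
  shows "\<exists>dat\<in>Dset n. P = rb dat \<and> x ^ n * y ^ (d 4 P) \<le> wll x y (snd (snd dat))"
proof -
  have cp: "convex_polyomino P" and nz: "normalized P" and nP: "d 2 P + d 3 P = n"
    using P unfolding convex_polys_n_def by auto
  obtain w b t where Pe: "P = cellsf w b t" and v: "validc w b t" and bpos: "\<forall>i<w. 0 \<le> b i"
    and bz: "\<exists>i<w. b i = 0" and tu: "topuni w t" and bu: "botuni w b"
    using convex_cols[OF cp nz] by blast
  have w1: "1 \<le> w" and bt: "\<And>i. i < w \<Longrightarrow> b i \<le> t i" using v unfolding validc_def by auto
  define m where "m = w - 1"
  have wm: "w = Suc m" using w1 unfolding m_def by simp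
  define ft where "ft k = t (Suc k) - t k" for k
  define fb where "fb k = b (Suc k) - b k" for k
  define lt where "lt = map ft [0..<m]"
  define lb where "lb = map fb [0..<m]"
  have Nf: "n = nat (t 0 - b 0 + 2) + nat (t (w-1) - b (w-1) + 2) + (\<Sum>k<m. ct (ft k) + ct (fb k))"
    using N_formula[OF v] nP Pe unfolding m_def ft_def fb_def by simp
  have Df: "d 4 P = (\<Sum>k<m. of_bool (ft k \<noteq> 0) + of_bool (fb k \<noteq> 0))"
    using D_formula[OF v] Pe unfolding m_def ft_def fb_def by simp
  have ct1: "1 \<le> ct z" and ctabs: "\<bar>z\<bar> \<le> int (ct z)" for z unfolding ct_def by auto
  have sumct: "(\<Sum>k<m. ct (ft k) + ct (fb k)) \<le> n" using Nf by simp
  have mn: "m \<le> n"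
  proof -
    have "(\<Sum>k<m. (1::nat)) \<le> (\<Sum>k<m. ct (ft k) + ct (fb k))" by (rule sum_mono) (use ct1 in \<open>auto intro: add_increasing\<close>)
    then show ?thesis using sumct by simp
  qed
  have ctle: "ct (ft k) \<le> n" "ct (fb k) \<le> n" if "k < m" for k
  proof -
    have "ct (ft k) + ct (fb k) \<le> (\<Sum>k<m. ct (ft k) + ct (fb k))"
      by (rule member_le_sum) (use that in auto)
    then show "ct (ft k) \<le> n" "ct (fb k) \<le> n" using sumct by auto
  qed
  have abs_ft: "\<bar>ft k\<bar> \<le> int n" and abs_fb: "\<bar>fb k\<bar> \<le> int n" if "k < m" for k
    using ctabs[of "ft k"] ctabs[of "fb k"] ctle[OF that] by linarith+
  have rb1: "rb (b 0, t 0, lt, lb) = cellsf (Suc m) (\<lambda>i. b 0 + sum_list (take i lb)) (\<lambda>i. t 0 + sum_list (take i lt))"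
    by (simp add: rb_def lt_def lb_def)
  have "cellsf (Suc m) b t = cellsf (Suc m) (\<lambda>i. b 0 + sum_list (take i lb)) (\<lambda>i. t 0 + sum_list (take i lt))"
  proof (rule cellsf_cong)
    fix i assume "i < Suc m"
    then have "i \<le> m" by simp
    then show "b i = b 0 + sum_list (take i lb) \<and> t i = t 0 + sum_list (take i lt)"
      unfolding ft_def fb_def lt_def lb_def by (simp add: take_diffs)
  qed
  then have rbeq: "P = rb (b 0, t 0, lt, lb)" using rb1 Pe wm by simp
  obtain i0 where i0: "i0 < w" "b i0 = 0" using bz by auto
  have "b i0 - b 0 = (\<Sum>k<i0. fb k)" unfolding fb_def by (simp add: sum_lessThan_telescope)
  then have e1: "b 0 = - (\<Sum>k<i0. fb k)" using i0 by simp
  have e2: "- (\<Sum>k<i0. fb k) \<le> (\<Sum>k<i0. \<bar>fb k\<bar>)"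
    using abs_ge_minus_self[of "\<Sum>k<i0. fb k"] sum_abs[of fb "{..<i0}"] by linarith
  have sub: "{..<i0} \<subseteq> {..<m}" using i0 wm by auto
  have e3: "(\<Sum>k<i0. \<bar>fb k\<bar>) \<le> (\<Sum>k<m. \<bar>fb k\<bar>)"
    by (rule sum_mono2[OF finite_lessThan sub]) simp
  have e4: "(\<Sum>k<m. \<bar>fb k\<bar>) \<le> (\<Sum>k<m. int (ct (ft k) + ct (fb k)))"
  proof (rule sum_mono)
    fix k show "\<bar>fb k\<bar> \<le> int (ct (ft k) + ct (fb k))" using ctabs[of "fb k"] by simp
  qed
  have e5: "(\<Sum>k<m. int (ct (ft k) + ct (fb k))) = int (\<Sum>k<m. ct (ft k) + ct (fb k))"
    by (simp only: of_nat_sum)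
  have b0n: "b 0 \<le> int n" using e1 e2 e3 e4 e5 sumct by linarith
  have b00: "0 \<le> b 0" using bpos w1 by auto
  have "nat (t 0 - b 0 + 2) \<le> n" using Nf by linarith
  then have t0n: "t 0 \<le> 2 * int n" using b0n by linarith
  have t00: "0 \<le> t 0" using bt[of 0] w1 b00 by auto
  have su1: "lt \<in> SU 1 (int n) m" unfolding lt_def
    by (rule SU_memI) (use abs_ft topuni_SU[OF tu] in \<open>auto simp: m_def ft_def\<close>)
  have su2: "lb \<in> SU (-1) (int n) m" unfolding lb_def
    by (rule SU_memI) (use abs_fb topuni_SU[OF botuni_topuni[OF bu]] in \<open>auto simp: m_def fb_def\<close>)
  have inD: "(b 0, t 0, lt, lb) \<in> Dset n"
    unfolding Dset_def LL_def using b0n b00 t0n t00 su1 su2 mn by (auto simp: lt_def lb_def)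
  have "x ^ n \<le> x ^ (\<Sum>k<m. ct (ft k) + ct (fb k))" using x sumct by (simp add: power_decreasing)
  then have "x ^ n * y ^ (d 4 P) \<le> x ^ (\<Sum>k<m. ct (ft k) + ct (fb k)) * y ^ (d 4 P)"
    using y by (simp add: mult_right_mono)
  also have "\<dots> = (\<Prod>k<m. wg x y (ft k) * wg x y (fb k))"
    unfolding Df power_sum prod.distrib[symmetric] power_add wg_def by (auto intro!: prod.cong)
  also have "\<dots> = wll x y (lt, lb)"
    unfolding wll_def lt_def lb_def by (simp add: prod_list_upt prod.distrib)
  finally show ?thesis using inD rbeq by (intro bexI[of _ "(b 0, t 0, lt, lb)"]) auto
qed


lemma finite_SU: "finite (SU s n m)"
proof -
  have "SU s n m \<subseteq> lists_of m {-n..n}" unfolding SU_def lists_of_def by (force simp: abs_le_iff)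
  then show ?thesis using finite_lists_of[of "{-n..n}" m] finite_subset by blast
qed

lemma LL_sub: "LL n \<subseteq> (\<Union>m\<in>{..n}. SU 1 (int n) m \<times> SU (-1) (int n) m)"
  unfolding LL_def by auto

lemma finite_LL: "finite (LL n)"
  by (rule finite_subset[OF LL_sub]) (auto simp: finite_SU)

lemma finite_Dset: "finite (Dset n)"
  unfolding Dset_def using finite_LL by auto

lemma prod_list_wg_nonneg: "0 \<le> x \<Longrightarrow> 0 \<le> y \<Longrightarrow> 0 \<le> prod_list (map (wg x y) l)"
  by (induction l) (auto simp: wg_nonneg)

lemma wll_nonneg: "0 \<le> x \<Longrightarrow> 0 \<le> y \<Longrightarrow> 0 \<le> wll x y ll"
  unfolding wll_def by (simp add: prod_list_wg_nonneg)

lemma sum_LL: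
  assumes x: "0 < x" "x < 1" and y: "0 < y" and g: "x + y * x / (1 - x) \<le> 1"
  shows "(\<Sum>ll\<in>LL n. wll x y ll) \<le> (real n + 1) ^ 3"
proof -
  have g1: "\<And>s. s = 1 \<or> s = -1 \<Longrightarrow> (\<Sum>z\<in>{z. \<bar>z\<bar> \<le> int n \<and> 0 \<le> s * z}. wg x y z) \<le> 1"
   and g2: "\<And>s. s = 1 \<or> s = -1 \<Longrightarrow> (\<Sum>z\<in>{z. \<bar>z\<bar> \<le> int n \<and> s * z \<le> 0}. wg x y z) \<le> 1"
    using sum_wg_le1[OF x y g] by blast+
  have su: "(\<Sum>l\<in>SU s (int n) m. prod_list (map (wg x y) l)) \<le> real m + 1" if "s = 1 \<or> s = -1" for s m
    by (rule sum_SU_le) (use wg_nonneg x y g1[OF that] g2[OF that] in auto)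
  have "(\<Sum>ll\<in>LL n. wll x y ll) \<le> (\<Sum>ll\<in>(\<Union>m\<in>{..n}. SU 1 (int n) m \<times> SU (-1) (int n) m). wll x y ll)"
    by (rule sum_mono2[OF _ LL_sub]) (use wll_nonneg x y finite_SU in auto)
  also have "\<dots> \<le> (\<Sum>m\<in>{..n}. \<Sum>ll\<in>SU 1 (int n) m \<times> SU (-1) (int n) m. wll x y ll)"
    by (rule sum_UN_le_nonneg) (use wll_nonneg x y finite_SU in auto)
  also have "\<dots> \<le> (\<Sum>m\<in>{..n}. (real n + 1) ^ 2)"
  proof (rule sum_mono)
    fix m assume m: "m \<in> {..n}"
    have "(\<Sum>ll\<in>SU 1 (int n) m \<times> SU (-1) (int n) m. wll x y ll) =
       (\<Sum>l1\<in>SU 1 (int n) m. prod_list (map (wg x y) l1)) * (\<Sum>l2\<in>SU (-1) (int n) m. prod_list (map (wg x y) l2))"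
      unfolding wll_def sum_product by (simp only: sum.cartesian_product) (rule sum.cong, auto)
    also have "\<dots> \<le> (real m + 1) * (real m + 1)"
      by (rule mult_mono) (use su[of 1 m] su[of "-1" m] in \<open>auto intro!: sum_nonneg prod_list_wg_nonneg simp: x y less_imp_le\<close>)
    also have "\<dots> \<le> (real n + 1) ^ 2" using m by (simp add: power2_eq_square mult_mono)
    finally show "(\<Sum>ll\<in>SU 1 (int n) m \<times> SU (-1) (int n) m. wll x y ll) \<le> (real n + 1) ^ 2" .
  qed
  also have "\<dots> = (real n + 1) ^ 3" by (simp add: power_numeral_reduce)
  finally show ?thesis .
qed

lemma sum_snd_prod: "(\<Sum>z\<in>A \<times> B. h (snd z)) = real (card A) * (\<Sum>q\<in>B. h q :: real)"
proof -
  have "(\<Sum>z\<in>A \<times> B. h (snd z)) = (\<Sum>a\<in>A. \<Sum>q\<in>B. h q)"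
    by (simp only: sum.cartesian_product) (rule sum.cong, auto)
  then show ?thesis by simp
qed

lemma sum_Dset:
  assumes x: "0 < x" "x < 1" and y: "0 < y" and g: "x + y * x / (1 - x) \<le> 1"
  shows "(\<Sum>dat\<in>Dset n. wll x y (snd (snd dat))) \<le> (2 * real n + 1) ^ 2 * (real n + 1) ^ 3"
proof -
  have "(\<Sum>dat\<in>Dset n. wll x y (snd (snd dat))) =
     (\<Sum>b0\<in>{0..2 * int n}. \<Sum>t0\<in>{0..2 * int n}. \<Sum>ll\<in>LL n. wll x y ll)"
    unfolding Dset_def
    using sum_snd_prod[where A="{0..2 * int n}" and B="{0..2 * int n} \<times> LL n" and h="\<lambda>q. wll x y (snd q)"]
      sum_snd_prod[where A="{0..2 * int n}" and B="LL n" and h="wll x y"] by simp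
  also have "\<dots> = (2 * real n + 1) ^ 2 * (\<Sum>ll\<in>LL n. wll x y ll)"
    by (simp add: power2_eq_square)
  also have "\<dots> \<le> (2 * real n + 1) ^ 2 * (real n + 1) ^ 3"
    by (rule mult_left_mono[OF sum_LL[OF x y g]]) simp
  finally show ?thesis .
qed

theorem UB:
  assumes x: "0 < x" "x < 1" and y: "0 < y" and g: "x + y * x / (1 - x) \<le> 1"
  shows "finite (convex_polys_n n)"
    and "(\<Sum>P\<in>convex_polys_n n. x ^ n * y ^ (d 4 P)) \<le> (2 * real n + 1) ^ 2 * (real n + 1) ^ 3"
proof -
  let ?S = "convex_polys_n n"
  define enc where "enc P = (SOME dat. dat \<in> Dset n \<and> P = rb dat \<and> x ^ n * y ^ (d 4 P) \<le> wll x y (snd (snd dat)))" for P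
  have encP: "enc P \<in> Dset n \<and> P = rb (enc P) \<and> x ^ n * y ^ (d 4 P) \<le> wll x y (snd (snd (enc P)))" if "P \<in> ?S" for P
  proof -
    have "\<exists>dat. dat \<in> Dset n \<and> P = rb dat \<and> x ^ n * y ^ (d 4 P) \<le> wll x y (snd (snd dat))"
      using enc_exists[OF that x(1) less_imp_le[OF x(2)] y] by blast
    then show ?thesis unfolding enc_def by (rule someI_ex)
  qed
  have sub: "?S \<subseteq> rb ` Dset n" using encP by blast
  show fin: "finite ?S" by (rule finite_subset[OF sub]) (simp add: finite_Dset)
  have inj: "inj_on enc ?S" by (rule inj_onI) (metis encP)
  have "(\<Sum>P\<in>?S. x ^ n * y ^ (d 4 P)) \<le> (\<Sum>P\<in>?S. wll x y (snd (snd (enc P))))"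
    by (rule sum_mono) (use encP in auto)
  also have "\<dots> = (\<Sum>dat\<in>enc ` ?S. wll x y (snd (snd dat)))"
    by (simp add: sum.reindex[OF inj])
  also have "\<dots> \<le> (\<Sum>dat\<in>Dset n. wll x y (snd (snd dat)))"
    by (rule sum_mono2[OF finite_Dset]) (use encP wll_nonneg x y in auto)
  also have "\<dots> \<le> (2 * real n + 1) ^ 2 * (real n + 1) ^ 3" by (rule sum_Dset[OF x y g])
  finally show "(\<Sum>P\<in>?S. x ^ n * y ^ (d 4 P)) \<le> (2 * real n + 1) ^ 2 * (real n + 1) ^ 3" .
qed


definition cc :: "nat \<Rightarrow> nat" where "cc k = (if k = 0 then 1 else k)"
definition cost :: "nat list \<Rightarrow> nat" where "cost l = sum_list (map cc l)"

lemma cost_simps [simp]: "cost [] = 0" "cost (k # l) = cc k + cost l" "cost (l1 @ l2) = cost l1 + cost l2"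
  unfolding cost_def by auto

lemma cc_pos: "1 \<le> cc k" unfolding cc_def by auto
lemma cc_ge: "k \<le> cc k" unfolding cc_def by auto

definition Eset :: "nat \<Rightarrow> nat list set" where "Eset a = {l. cost l = a}"

lemma length_le_cost: "length l \<le> cost l"
  by (induction l) (auto simp: cc_pos add_mono_thms_linordered_semiring(1) Suc_le_eq cc_def split: if_splits)

lemma elem_le_cost: "k \<in> set l \<Longrightarrow> k \<le> cost l"
  by (induction l) (auto simp: cc_def)

lemma finite_Eset: "finite (Eset a)"
proof -
  have "Eset a \<subseteq> {l. set l \<subseteq> {..a} \<and> length l \<le> a}"
    unfolding Eset_def using length_le_cost elem_le_cost by fastforce
  then show ?thesis using finite_lists_length_le[of "{..a}" a] finite_subset by blast
qed

lemma Eset_0: "Eset 0 = {[]}"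
  unfolding Eset_def by (auto, case_tac x, auto simp: cc_def split: if_splits)

lemma Eset_Suc: "Eset (Suc a) = (\<Union>k\<in>{0..Suc a}. (\<lambda>l. k # l) ` Eset (Suc a - cc k))"
proof (intro set_eqI iffI)
  fix l assume "l \<in> Eset (Suc a)"
  then have c: "cost l = Suc a" unfolding Eset_def by simp
  then obtain k l' where l: "l = k # l'" by (cases l) auto
  have "k \<le> Suc a" using c l cc_ge[of k] by simp
  moreover have "l' \<in> Eset (Suc a - cc k)" using c l unfolding Eset_def by simp
  ultimately show "l \<in> (\<Union>k\<in>{0..Suc a}. (\<lambda>l. k # l) ` Eset (Suc a - cc k))" using l by auto
next
  fix l assume "l \<in> (\<Union>k\<in>{0..Suc a}. (\<lambda>l. k # l) ` Eset (Suc a - cc k))"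
  then obtain k l' where l: "l = k # l'" "k \<le> Suc a" "cost l' = Suc a - cc k" unfolding Eset_def by auto
  have "cc k \<le> Suc a" using l(2) unfolding cc_def by auto
  then show "l \<in> Eset (Suc a)" using l unfolding Eset_def by simp
qed

definition E :: "nat \<Rightarrow> nat" where "E a = card (Eset a)"

lemma E_0: "E 0 = 1" unfolding E_def Eset_0 by simp

lemma E_Suc: "E (Suc a) = E a + (\<Sum>k\<in>{1..Suc a}. E (Suc a - k))"
proof -
  have "E (Suc a) = (\<Sum>k\<in>{0..Suc a}. card ((\<lambda>l. k # l) ` Eset (Suc a - cc k)))"
    unfolding E_def Eset_Suc by (rule card_UN_disjoint) (auto simp: finite_Eset)
  also have "\<dots> = (\<Sum>k\<in>{0..Suc a}. E (Suc a - cc k))"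
    unfolding E_def by (rule sum.cong) (auto simp: card_image inj_on_def)
  also have "\<dots> = E (Suc a - cc 0) + (\<Sum>k\<in>{1..Suc a}. E (Suc a - cc k))"
    by (simp add: sum.atLeast_Suc_atMost)
  also have "(\<Sum>k\<in>{1..Suc a}. E (Suc a - cc k)) = (\<Sum>k\<in>{1..Suc a}. E (Suc a - k))"
    by (rule sum.cong) (auto simp: cc_def)
  finally show ?thesis by (simp add: cc_def)
qed

lemma E_1: "E 1 = 2" using E_Suc[of 0] E_0 by simp

lemma E_rec_aux: "E (Suc (Suc a)) + E a = 3 * E (Suc a)"
proof -
  have s1: "(\<Sum>k\<in>{1..Suc (Suc a)}. E (Suc (Suc a) - k)) = E (Suc a) + (\<Sum>k\<in>{1..Suc a}. E (Suc a - k))"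
  proof -
    have "(\<Sum>k\<in>{1..Suc (Suc a)}. E (Suc (Suc a) - k)) = E (Suc a) + (\<Sum>k\<in>{2..Suc (Suc a)}. E (Suc (Suc a) - k))"
      by (simp add: sum.atLeast_Suc_atMost numeral_2_eq_2)
    also have "(\<Sum>k\<in>{2..Suc (Suc a)}. E (Suc (Suc a) - k)) = (\<Sum>k\<in>{1..Suc a}. E (Suc a - k))"
      using sum.shift_bounds_cl_Suc_ivl[of "\<lambda>k. E (Suc (Suc a) - k)" 1 "Suc a"] by (simp add: numeral_2_eq_2)
    finally show ?thesis .
  qed
  show ?thesis
    using E_Suc[of "Suc a"] E_Suc[of a] s1 by simp
qed

lemma E_lower: "real (E (Suc a)) \<ge> ((3 + sqrt 5) / 2) ^ a"
proof -
  define r :: real where "r = (3 + sqrt 5) / 2"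
  define q :: real where "q = (3 - sqrt 5) / 2"
  have rq: "r + q = 3" "r * q = 1" unfolding r_def q_def by (auto simp: field_simps)
  have X: "real (E (Suc a)) - q * real (E a) = r ^ a * (2 - q)" for a
  proof (induction a)
    case 0
    then show ?case using E_0 E_1 by simp
  next
    case (Suc a)
    have "real (E (Suc (Suc a)) + E a) = real (3 * E (Suc a))" using E_rec_aux[of a] by simp
    then have e: "real (E (Suc (Suc a))) = 3 * real (E (Suc a)) - real (E a)" by simp
    have r3: "r = 3 - q" using rq by simp
    have "real (E (Suc (Suc a))) - q * real (E (Suc a)) = (3 - q) * real (E (Suc a)) - real (E a)"
      unfolding e by (simp add: algebra_simps)
    also have "\<dots> = r * real (E (Suc a)) - (r * q) * real (E a)" using r3 rq(2) by simp
    also have "\<dots> = r * (real (E (Suc a)) - q * real (E a))" by (simp add: algebra_simps)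
    finally have "real (E (Suc (Suc a))) - q * real (E (Suc a)) = r * (real (E (Suc a)) - q * real (E a))" .
    then show ?case using Suc.IH by simp
  qed
  have q0: "0 \<le> q" and q1: "q \<le> 1" unfolding q_def using real_sqrt_le_iff[of 5 9] real_sqrt_le_iff[of 1 5] by auto
  have r0: "0 \<le> r ^ a" unfolding r_def by simp
  have "r ^ a * 1 \<le> r ^ a * (2 - q)" by (rule mult_left_mono) (use q1 r0 in auto)
  then have "r ^ a \<le> r ^ a * (2 - q)" by simp
  also have "\<dots> = real (E (Suc a)) - q * real (E a)" using X by simp
  also have "\<dots> \<le> real (E (Suc a))" using q0 by simp
  finally show ?thesis unfolding r_def .
qed


definition CLa :: "nat \<Rightarrow> nat list set" where "CLa a = {l. even (length l) \<and> cost l = a}"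
definition CLs :: "nat \<Rightarrow> nat \<Rightarrow> nat list set" where "CLs a s = {l. even (length l) \<and> cost l = a \<and> sum_list l = s}"

lemma finite_CLa: "finite (CLa a)"
  by (rule finite_subset[OF _ finite_Eset[of a]]) (auto simp: CLa_def Eset_def)
lemma finite_CLs: "finite (CLs a s)"
  by (rule finite_subset[OF _ finite_Eset[of a]]) (auto simp: CLs_def Eset_def)

lemma sum_list_le_cost: "sum_list l \<le> cost l"
  by (induction l) (auto simp: cc_def)

definition pad :: "nat list \<Rightarrow> nat list" where
  "pad l = (if even (length l) then [1, 1] else [2])"

lemma CLa_ge_E: "E a \<le> card (CLa (a + 2))"
proof -
  have inj: "inj_on (\<lambda>l. l @ pad l) (Eset a)"
  proof (rule inj_onI)
    fix l1 l2 assume "l1 @ pad l1 = l2 @ pad l2"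
    moreover have "pad l1 = pad l2"
    proof -
      have "last (l1 @ pad l1) = last (l2 @ pad l2)" using calculation by simp
      then show ?thesis unfolding pad_def by (auto split: if_splits)
    qed
    ultimately show "l1 = l2" by simp
  qed
  have sub: "(\<lambda>l. l @ pad l) ` Eset a \<subseteq> CLa (a + 2)"
    unfolding Eset_def CLa_def pad_def by (auto simp: cc_def)
  show ?thesis unfolding E_def using card_inj_on_le[OF inj sub finite_CLa] .
qed

lemma pigeon: "\<exists>s\<le>a. card (CLa a) \<le> (a + 1) * card (CLs a s)"
proof (rule ccontr)
  assume "\<not> ?thesis"
  then have lt: "(a + 1) * card (CLs a s) < card (CLa a)" if "s \<le> a" for s using that by auto
  have "CLa a = (\<Union>s\<in>{..a}. CLs a s)"
    unfolding CLa_def CLs_def using sum_list_le_cost by auto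
  then have "card (CLa a) \<le> (\<Sum>s\<in>{..a}. card (CLs a s))" by (simp add: card_UN_le)
  then have "(a + 1) * card (CLa a) \<le> (a + 1) * (\<Sum>s\<in>{..a}. card (CLs a s))"
    by (rule mult_left_mono) simp
  also have "\<dots> = (\<Sum>s\<in>{..a}. (a + 1) * card (CLs a s))"
    by (rule sum_distrib_left)
  also have "\<dots> < (\<Sum>s\<in>{..a}. card (CLa a))"
    by (rule sum_strict_mono) (use lt in auto)
  also have "\<dots> = (a + 1) * card (CLa a)" by simp
  finally show False by simp
qed


fun okJ :: "int \<Rightarrow> (int \<times> int) list \<Rightarrow> bool" where
  "okJ h [] = (1 \<le> h)"
| "okJ h ((dt, db) # J) = (1 \<le> h \<and> db \<le> h - 1 \<and> - dt \<le> h - 1 \<and> okJ (h + dt - db) J)"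

definition DJ :: "(int \<times> int) list \<Rightarrow> int" where "DJ J = sum_list (map (\<lambda>(dt, db). dt - db) J)"

lemma okJ_pos: "okJ h J \<Longrightarrow> 1 \<le> h"
  by (cases J) auto

lemma okJ_append: "okJ h (J1 @ J2) \<longleftrightarrow> okJ h J1 \<and> okJ (h + DJ J1) J2"
  by (induction J1 arbitrary: h) (auto simp: DJ_def okJ_pos algebra_simps)

definition bfun :: "int \<Rightarrow> int list \<Rightarrow> nat \<Rightarrow> int" where "bfun b0 l i = b0 + sum_list (take i l)"

lemma bfun_0 [simp]: "bfun b0 l 0 = b0" unfolding bfun_def by simp
lemma bfun_Suc_Cons [simp]: "bfun b0 (x # l) (Suc i) = bfun (b0 + x) l i" unfolding bfun_def by simp

lemma rb_eq: "rb (b0, t0, lt, lb) = cellsf (Suc (length lt)) (bfun b0 lb) (bfun t0 lt)"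
  unfolding rb_def bfun_def by simp

lemma okJ_validc:
  assumes "okJ (t0 - b0 + 1) J"
  shows "validc (Suc (length J)) (bfun b0 (map snd J)) (bfun t0 (map fst J))"
  using assms
proof (induction J arbitrary: b0 t0)
  case Nil
  then show ?case unfolding validc_def by auto
next
  case (Cons x J)
  obtain dt db where x: "x = (dt, db)" by force
  have h: "1 \<le> t0 - b0 + 1" "db \<le> t0 - b0" "- dt \<le> t0 - b0" "okJ ((t0 + dt) - (b0 + db) + 1) J"
    using Cons.prems unfolding x by (auto simp: algebra_simps)
  have IH: "validc (Suc (length J)) (bfun (b0 + db) (map snd J)) (bfun (t0 + dt) (map fst J))"
    using Cons.IH[OF h(4)] .
  have g1: "\<forall>i<Suc (length (x # J)). bfun b0 (map snd (x # J)) i \<le> bfun t0 (map fst (x # J)) i"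
  proof (intro allI impI)
    fix i assume "i < Suc (length (x # J))"
    then show "bfun b0 (map snd (x # J)) i \<le> bfun t0 (map fst (x # J)) i"
      using IH h unfolding validc_def x by (cases i) auto
  qed
  have g2: "\<forall>k. Suc k < Suc (length (x # J)) \<longrightarrow> bfun b0 (map snd (x # J)) (Suc k) \<le> bfun t0 (map fst (x # J)) k \<and>
          bfun b0 (map snd (x # J)) k \<le> bfun t0 (map fst (x # J)) (Suc k)"
  proof (intro allI impI)
    fix k assume k: "Suc k < Suc (length (x # J))"
    show "bfun b0 (map snd (x # J)) (Suc k) \<le> bfun t0 (map fst (x # J)) k \<and>
          bfun b0 (map snd (x # J)) k \<le> bfun t0 (map fst (x # J)) (Suc k)"
    proof (cases k)
      case 0
      then show ?thesis using h unfolding x by simp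
    next
      case (Suc k')
      then show ?thesis using IH k unfolding validc_def x by simp
    qed
  qed
  show ?case unfolding validc_def using g1 g2 by simp
qed

lemma take_Suc_sum: "i < length l \<Longrightarrow> sum_list (take (Suc i) l) = sum_list (take i l) + l ! i"
  by (simp add: take_Suc_conv_app_nth)

lemma bfun_Suc: "i < length l \<Longrightarrow> bfun b0 l (Suc i) = bfun b0 l i + l ! i"
  unfolding bfun_def by (simp add: take_Suc_sum)

lemma bfun_mono:
  assumes "\<forall>k<p. 0 \<le> l ! k" "p \<le> length l" "i \<le> j" "j \<le> p"
  shows "bfun b0 l i \<le> bfun b0 l j"
  using assms(3,4)
proof (induction j)
  case 0
  then show ?case by simp
next
  case (Suc j)
  show ?case
  proof (cases "i = Suc j")
    case True
    then show ?thesis by simp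
  next
    case False
    then have "i \<le> j" "j < p" using Suc.prems by auto
    then show ?thesis using Suc.IH bfun_Suc[of j l b0] assms(1,2) by auto
  qed
qed

lemma bfun_anti:
  assumes "\<forall>k. p \<le> k \<longrightarrow> k < length l \<longrightarrow> l ! k \<le> 0" "p \<le> j" "j \<le> k" "k \<le> length l"
  shows "bfun b0 l k \<le> bfun b0 l j"
  using assms(3,4)
proof (induction k)
  case 0
  then show ?case by simp
next
  case (Suc k)
  show ?case
  proof (cases "j = Suc k")
    case True
    then show ?thesis by simp
  next
    case False
    then have jk: "j \<le> k" "k < length l" using Suc.prems by auto
    have "l ! k \<le> 0" using assms(1,2) jk by auto
    then show ?thesis using Suc.IH[OF jk(1)] bfun_Suc[OF jk(2), of b0] jk by simp
  qed
qed

lemma sign_topuni: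
  assumes "p \<le> length l" "\<forall>k<p. 0 \<le> l ! k" "\<forall>k. p \<le> k \<longrightarrow> k < length l \<longrightarrow> l ! k \<le> 0"
  shows "topuni (Suc (length l)) (bfun t0 l)"
  unfolding topuni_def
proof (intro allI impI)
  fix i j k assume ij: "i \<le> j" and jk: "j \<le> k" and kw: "k < Suc (length l)"
  show "min (bfun t0 l i) (bfun t0 l k) \<le> bfun t0 l j"
  proof (cases "j \<le> p")
    case True
    then have "bfun t0 l i \<le> bfun t0 l j" using bfun_mono[OF assms(2,1) ij] by simp
    then show ?thesis by simp
  next
    case False
    then have "bfun t0 l k \<le> bfun t0 l j" using bfun_anti[OF assms(3), of j k] jk kw by simp
    then show ?thesis by simp
  qed
qed

lemma bfun_neg: "bfun (- b0) (map uminus l) i = - bfun b0 l i"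
proof (induction l arbitrary: i b0)
  case Nil
  then show ?case by (simp add: bfun_def)
next
  case (Cons x l)
  then show ?case by (cases i) (simp_all add: bfun_def)
qed

lemma bfun_neg_fun: "bfun (- b0) (map uminus l) = (\<lambda>i. - bfun b0 l i)"
  by (rule ext) (rule bfun_neg)

lemma topuni_botuni: "topuni w (\<lambda>i. - b i) \<Longrightarrow> botuni w b"
  unfolding botuni_def topuni_def by (simp add: min_def max_def) (smt (verit))

lemma sign_botuni:
  assumes "p \<le> length l" "\<forall>k<p. l ! k \<le> 0" "\<forall>k. p \<le> k \<longrightarrow> k < length l \<longrightarrow> 0 \<le> l ! k"
  shows "botuni (Suc (length l)) (bfun b0 l)"
proof -
  have "topuni (Suc (length (map uminus l))) (bfun (- b0) (map uminus l))"
    by (rule sign_topuni[of p]) (use assms in auto)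
  then show ?thesis by (intro topuni_botuni) (simp add: bfun_neg_fun)
qed

lemma sign_min:
  assumes "p \<le> length l" "\<forall>k<p. l ! k \<le> 0" "\<forall>k. p \<le> k \<longrightarrow> k < length l \<longrightarrow> 0 \<le> l ! k" "j \<le> length l"
  shows "bfun b0 l p \<le> bfun b0 l j"
proof (cases "j \<le> p")
  case True
  have "bfun (- b0) (map uminus l) j \<le> bfun (- b0) (map uminus l) p"
    by (rule bfun_mono[of p]) (use assms True in auto)
  then show ?thesis by (simp add: bfun_neg)
next
  case False
  have "bfun (- b0) (map uminus l) j \<le> bfun (- b0) (map uminus l) p"
    by (rule bfun_anti[of p]) (use assms False in auto)
  then show ?thesis by (simp add: bfun_neg)
qed

lemma rb_N:
  assumes "okJ (t0 - b0 + 1) J"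
  shows "d 2 (rb (b0, t0, map fst J, map snd J)) + d 3 (rb (b0, t0, map fst J, map snd J)) =
     nat (t0 - b0 + 2) + nat (t0 - b0 + DJ J + 2) + sum_list (map (\<lambda>(dt, db). ct dt + ct db) J)"
proof -
  let ?b = "bfun b0 (map snd J)" and ?t = "bfun t0 (map fst J)"
  have v: "validc (Suc (length J)) ?b ?t" by (rule okJ_validc[OF assms])
  have e: "d 2 (rb (b0, t0, map fst J, map snd J)) + d 3 (rb (b0, t0, map fst J, map snd J)) =
     nat (?t 0 - ?b 0 + 2) + nat (?t (length J) - ?b (length J) + 2) +
     (\<Sum>k<length J. ct (?t (Suc k) - ?t k) + ct (?b (Suc k) - ?b k))"
    using N_formula[OF v] unfolding rb_eq by simp
  have "?t (length J) - ?b (length J) = t0 - b0 + DJ J"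
    unfolding bfun_def DJ_def by (simp add: sum_list_subtractf split_def)
  moreover have "(\<Sum>k<length J. ct (?t (Suc k) - ?t k) + ct (?b (Suc k) - ?b k)) =
      sum_list (map (\<lambda>(dt, db). ct dt + ct db) J)"
  proof -
    have "(\<Sum>k<length J. ct (?t (Suc k) - ?t k) + ct (?b (Suc k) - ?b k)) =
        (\<Sum>k<length J. (\<lambda>(dt, db). ct dt + ct db) (J ! k))"
      by (rule sum.cong) (auto simp: bfun_Suc split_def)
    also have "\<dots> = sum_list (map (\<lambda>(dt, db). ct dt + ct db) J)"
      by (simp add: sum_list_sum_nth atLeast0LessThan)
    finally show ?thesis .
  qed
  ultimately show ?thesis using e by simp
qed

lemma cellsf_inj:
  assumes "validc w b t" "validc w' b' t'" "cellsf w b t = cellsf w' b' t'"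
  shows "w = w' \<and> (\<forall>i<w. b i = b' i \<and> t i = t' i)"
proof -
  have A: "w \<le> w' \<and> (\<forall>i<w. b' i \<le> b i \<and> t i \<le> t' i)"
    if v: "validc w b t" "validc w' b' t'" and e: "cellsf w b t = cellsf w' b' t'" for w b t w' b' t'
  proof -
    have bt: "\<And>i. i < w \<Longrightarrow> b i \<le> t i" using v unfolding validc_def by auto
    have w1: "1 \<le> w" using v unfolding validc_def by auto
    have m1: "(int i, b i) \<in> cellsf w' b' t'" "(int i, t i) \<in> cellsf w' b' t'" if "i < w" for i
      using bt[OF that] that e[symmetric] by (auto simp: mem_cellsf)
    have "int (w - 1) < int w'" using m1(1)[of "w-1"] w1 by (simp add: mem_cellsf)
    then have "w \<le> w'" by simp
    moreover have "\<forall>i<w. b' i \<le> b i \<and> t i \<le> t' i" using m1 by (simp add: mem_cellsf)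
    ultimately show ?thesis by simp
  qed
  from A[OF assms] A[OF assms(2,1) assms(3)[symmetric]] show ?thesis by force
qed

lemma rb_inj:
  assumes "okJ (t0 - b0 + 1) J" "okJ (t0' - b0' + 1) J'"
    and "rb (b0, t0, map fst J, map snd J) = rb (b0', t0', map fst J', map snd J')"
  shows "b0 = b0' \<and> t0 = t0' \<and> J = J'"
proof -
  have e: "Suc (length J) = Suc (length J') \<and>
     (\<forall>i<Suc (length J). bfun b0 (map snd J) i = bfun b0' (map snd J') i \<and> bfun t0 (map fst J) i = bfun t0' (map fst J') i)"
    by (rule cellsf_inj[OF okJ_validc[OF assms(1)] okJ_validc[OF assms(2)]]) (use assms(3) in \<open>simp add: rb_eq\<close>)
  then have len: "length J = length J'" by simp
  have b0: "b0 = b0'" and t0: "t0 = t0'" using e[THEN conjunct2, rule_format, of 0] by auto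
  have "J ! k = J' ! k" if k: "k < length J" for k
  proof -
    have "bfun b0 (map snd J) (Suc k) - bfun b0 (map snd J) k = bfun b0' (map snd J') (Suc k) - bfun b0' (map snd J') k"
         "bfun t0 (map fst J) (Suc k) - bfun t0 (map fst J) k = bfun t0' (map fst J') (Suc k) - bfun t0' (map fst J') k"
      using e k by auto
    then have "snd (J ! k) = snd (J' ! k)" "fst (J ! k) = fst (J' ! k)"
      using k len by (simp_all add: bfun_Suc)
    then show ?thesis by (simp add: prod_eq_iff)
  qed
  then have "J = J'" using len by (simp add: nth_equalityI)
  then show ?thesis using b0 t0 by simp
qed


fun jL :: "nat list \<Rightarrow> (int \<times> int) list" where
  "jL (u # v # l) = (int u, - int v) # jL l"
| "jL _ = []"

fun jR :: "nat list \<Rightarrow> (int \<times> int) list" where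
  "jR (u # v # l) = (- int u, int v) # jR l"
| "jR _ = []"

fun vsum :: "nat list \<Rightarrow> nat" where
  "vsum (u # v # l) = v + vsum l"
| "vsum _ = 0"

definition Ge :: "(int \<times> int) list" where "Ge = [(1, 1)]"
definition Go :: "(int \<times> int) list" where "Go = [(1, 2), (1, 0)]"

definition famJ :: "(int \<times> int) list \<Rightarrow> nat list \<Rightarrow> nat list \<Rightarrow> (int \<times> int) list" where
  "famJ G L R = jL L @ G @ jR R"

definition fam :: "(int \<times> int) list \<Rightarrow> nat list \<Rightarrow> nat list \<Rightarrow> cell set" where
  "fam G L R = rb (int (vsum L), int (vsum L) + 2, map fst (famJ G L R), map snd (famJ G L R))"

lemma DJ_append: "DJ (A @ B) = DJ A + DJ B" unfolding DJ_def by simp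

lemma DJ_jL: "even (length L) \<Longrightarrow> DJ (jL L) = int (sum_list L)"
  by (induction L rule: jL.induct) (auto simp: DJ_def)
lemma DJ_jR: "even (length R) \<Longrightarrow> DJ (jR R) = - int (sum_list R)"
  by (induction R rule: jR.induct) (auto simp: DJ_def)
lemma DJ_G: "DJ Ge = 0" "DJ Go = 0" unfolding DJ_def Ge_def Go_def by auto

lemma okJ_jL: "1 \<le> h \<Longrightarrow> okJ h (jL L)"
  by (induction L arbitrary: h rule: jL.induct) auto
lemma okJ_jR: "1 + int (sum_list R) \<le> h \<Longrightarrow> okJ h (jR R)"
  by (induction R arbitrary: h rule: jR.induct) auto
lemma okJ_G: "3 \<le> h \<Longrightarrow> okJ h Ge" "3 \<le> h \<Longrightarrow> okJ h Go"
  unfolding Ge_def Go_def by auto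

lemma ctsum_jL: "even (length L) \<Longrightarrow> sum_list (map (\<lambda>(dt, db). ct dt + ct db) (jL L)) = cost L"
  by (induction L rule: jL.induct) (auto simp: ct_def cc_def)
lemma ctsum_jR: "even (length R) \<Longrightarrow> sum_list (map (\<lambda>(dt, db). ct dt + ct db) (jR R)) = cost R"
  by (induction R rule: jR.induct) (auto simp: ct_def cc_def)
lemma ctsum_G: "sum_list (map (\<lambda>(dt, db). ct dt + ct db) Ge) = 2"
    "sum_list (map (\<lambda>(dt, db). ct dt + ct db) Go) = 5"
  unfolding Ge_def Go_def by (auto simp: ct_def)

lemma snd_jL: "sum_list (map snd (jL L)) = - int (vsum L)"
  by (induction L rule: jL.induct) auto

lemma set_jL: "x \<in> set (jL L) \<Longrightarrow> 0 \<le> fst x \<and> snd x \<le> 0"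
  by (induction L rule: jL.induct) auto
lemma set_jR: "x \<in> set (jR R) \<Longrightarrow> fst x \<le> 0 \<and> 0 \<le> snd x"
  by (induction R rule: jR.induct) auto
lemma set_G: "x \<in> set Ge \<Longrightarrow> 0 \<le> fst x \<and> 0 \<le> snd x" "x \<in> set Go \<Longrightarrow> 0 \<le> fst x \<and> 0 \<le> snd x"
  unfolding Ge_def Go_def by auto

lemma nth_app_sign:
  assumes "\<forall>x\<in>set A. P x" "\<forall>x\<in>set B. Q x"
  shows "\<forall>k<length A. P ((A @ B) ! k)" "\<forall>k. length A \<le> k \<longrightarrow> k < length (A @ B) \<longrightarrow> Q ((A @ B) ! k)"
  using assms by (auto simp: nth_append)

lemma fam_in:
  assumes L: "even (length L)" and R: "even (length R)" and s: "sum_list L = sum_list R"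
    and G: "G = Ge \<and> gc = 2 \<or> G = Go \<and> gc = 5"
  shows "fam G L R \<in> convex_polys_n (8 + cost L + cost R + gc)"
proof -
  let ?J = "famJ G L R"
  define b0 where "b0 = int (vsum L)"
  let ?b = "bfun b0 (map snd ?J)" and ?t = "bfun (b0 + 2) (map fst ?J)"
  have DG: "DJ G = 0" using G DJ_G by auto
  have okG: "okJ h G" if "3 \<le> h" for h using G okJ_G that by auto
  have setG: "\<forall>x\<in>set G. 0 \<le> fst x \<and> 0 \<le> snd x" using G set_G by auto
  have ok: "okJ ((b0 + 2) - b0 + 1) ?J"
    unfolding famJ_def okJ_append
    using okJ_jL[of 3 L] okG[of "3 + DJ (jL L)"] okJ_jR[of R "3 + DJ (jL L) + DJ G"] DJ_jL[OF L] DG s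
    by (simp add: add.assoc)
  have v: "validc (Suc (length ?J)) ?b ?t" by (rule okJ_validc[OF ok])
  have Peq: "fam G L R = cellsf (Suc (length ?J)) ?b ?t"
    unfolding fam_def b0_def[symmetric] rb_eq by simp
  have tsA: "\<forall>x\<in>set (map fst (jL L @ G)). 0 \<le> x" using set_jL setG by auto
  have tsB: "\<forall>x\<in>set (map fst (jR R)). x \<le> 0" using set_jR by auto
  have mf: "map fst ?J = map fst (jL L @ G) @ map fst (jR R)" unfolding famJ_def by simp
  have tu: "topuni (Suc (length ?J)) ?t"
    using sign_topuni[of "length (map fst (jL L @ G))" "map fst ?J" "b0 + 2"]
      nth_app_sign[OF tsA tsB] unfolding mf by (simp add: famJ_def)
  have bsA: "\<forall>x\<in>set (map snd (jL L)). x \<le> 0" using set_jL by auto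
  have bsB: "\<forall>x\<in>set (map snd (G @ jR R)). 0 \<le> x" using set_jR setG by auto
  have ms: "map snd ?J = map snd (jL L) @ map snd (G @ jR R)" unfolding famJ_def by simp
  have bu: "botuni (Suc (length ?J)) ?b"
    using sign_botuni[of "length (map snd (jL L))" "map snd ?J" b0]
      nth_app_sign[OF bsA bsB] unfolding ms by (simp add: famJ_def)
  have bmin: "?b (length (jL L)) \<le> ?b j" if "j \<le> length ?J" for j
    using sign_min[of "length (map snd (jL L))" "map snd ?J" j b0]
      nth_app_sign[OF bsA bsB] that unfolding ms by (simp add: famJ_def)
  have bp: "?b (length (jL L)) = 0"
    unfolding bfun_def famJ_def b0_def using snd_jL[of L] by simp
  have lenp: "length (jL L) < Suc (length ?J)" unfolding famJ_def by simp
  have norm: "normalized (fam G L R)" unfolding Peq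
    by (rule cellsf_normalized[OF v]) (use bmin bp lenp in \<open>auto simp: less_Suc_eq_le\<close>)
  have conv: "convex_polyomino (fam G L R)" unfolding Peq by (rule cellsf_convex[OF v tu bu])
  have N: "d 2 (fam G L R) + d 3 (fam G L R) = 8 + cost L + cost R + gc"
  proof -
    have "d 2 (fam G L R) + d 3 (fam G L R) =
        nat ((b0 + 2) - b0 + 2) + nat ((b0 + 2) - b0 + DJ ?J + 2) + sum_list (map (\<lambda>(dt, db). ct dt + ct db) ?J)"
      unfolding fam_def b0_def[symmetric] by (rule rb_N[OF ok])
    moreover have "DJ ?J = 0" unfolding famJ_def DJ_append DJ_jL[OF L] DJ_jR[OF R] DG s by simp
    moreover have "sum_list (map (\<lambda>(dt, db). ct dt + ct db) ?J) = cost L + gc + cost R"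
      unfolding famJ_def using ctsum_jL[OF L] ctsum_jR[OF R] ctsum_G G by auto
    ultimately show ?thesis by simp
  qed
  show ?thesis unfolding convex_polys_n_def using conv norm N by simp
qed

lemma split_app:
  assumes "\<forall>x\<in>set A1. snd x \<le> (0::int)" "\<forall>x\<in>set A2. snd x \<le> 0" "0 < snd g"
    and "A1 @ g # B1 = A2 @ g # B2"
  shows "A1 = A2 \<and> B1 = B2"
  using assms
proof (induction A1 arbitrary: A2)
  case Nil
  then show ?case by (cases A2) auto
next
  case (Cons a A1)
  then show ?case by (cases A2) auto
qed

lemma jL_inj: "even (length L1) \<Longrightarrow> even (length L2) \<Longrightarrow> jL L1 = jL L2 \<Longrightarrow> L1 = L2"
proof (induction L1 arbitrary: L2 rule: jL.induct)
  case (1 u v l)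
  then show ?case by (cases L2 rule: jL.cases) auto
next
  case "2_1"
  then show ?case by (cases L2 rule: jL.cases) auto
next
  case ("2_2" v)
  then show ?case by simp
qed

lemma jR_inj: "even (length L1) \<Longrightarrow> even (length L2) \<Longrightarrow> jR L1 = jR L2 \<Longrightarrow> L1 = L2"
proof (induction L1 arbitrary: L2 rule: jR.induct)
  case (1 u v l)
  then show ?case by (cases L2 rule: jR.cases) auto
next
  case "2_1"
  then show ?case by (cases L2 rule: jR.cases) auto
next
  case ("2_2" v)
  then show ?case by simp
qed


lemma fam_ok:
  assumes L: "even (length L)" and R: "even (length R)" and s: "sum_list L = sum_list R"
    and G: "G = Ge \<or> G = Go"
  shows "okJ 3 (famJ G L R)"
proof -
  have DG: "DJ G = 0" using G DJ_G by auto
  have okG: "okJ h G" if "3 \<le> h" for h using G okJ_G that by auto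
  show ?thesis
    unfolding famJ_def okJ_append
    using okJ_jL[of 3 L] okG[of "3 + DJ (jL L)"] okJ_jR[of R "3 + DJ (jL L) + DJ G"] DJ_jL[OF L] DG s
    by (simp add: add.assoc)
qed

lemma fam_inj:
  assumes G: "G = Ge \<or> G = Go"
    and L1: "even (length L1)" "even (length R1)" "sum_list L1 = sum_list R1"
    and L2: "even (length L2)" "even (length R2)" "sum_list L2 = sum_list R2"
    and e: "fam G L1 R1 = fam G L2 R2"
  shows "L1 = L2 \<and> R1 = R2"
proof -
  have ok1: "okJ ((int (vsum L1) + 2) - int (vsum L1) + 1) (famJ G L1 R1)" using fam_ok[OF L1 G] by simp
  have ok2: "okJ ((int (vsum L2) + 2) - int (vsum L2) + 1) (famJ G L2 R2)" using fam_ok[OF L2 G] by simp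
  have J: "famJ G L1 R1 = famJ G L2 R2" using rb_inj[OF ok1 ok2] e unfolding fam_def by blast
  obtain g G' where gG: "G = g # G'" "0 < snd g" using G unfolding Ge_def Go_def by auto
  have "jL L1 = jL L2 \<and> G' @ jR R1 = G' @ jR R2"
    by (rule split_app[of _ _ g]) (use J gG set_jL in \<open>auto simp: famJ_def\<close>)
  then show ?thesis using jL_inj[OF L1(1) L2(1)] jR_inj[OF L1(2) L2(2)] by auto
qed

lemma finite_polys: "finite (convex_polys_n n)"
  by (rule UB(1)[of "1/3" 1]) auto

lemma card_fam:
  assumes G: "G = Ge \<and> gc = 2 \<or> G = Go \<and> gc = 5" and n: "n = 8 + 2 * a + gc"
  shows "card (CLs a s) ^ 2 \<le> card (convex_polys_n n)"
proof -
  let ?F = "\<lambda>z. fam G (fst z) (snd z)"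
  have G': "G = Ge \<or> G = Go" using G by auto
  have inj: "inj_on ?F (CLs a s \<times> CLs a s)"
  proof (rule inj_onI)
    fix z1 z2 assume z1: "z1 \<in> CLs a s \<times> CLs a s" and z2: "z2 \<in> CLs a s \<times> CLs a s"
      and e: "?F z1 = ?F z2"
    obtain L1 R1 where z1e: "z1 = (L1, R1)" by (cases z1)
    obtain L2 R2 where z2e: "z2 = (L2, R2)" by (cases z2)
    have m: "L1 \<in> CLs a s" "R1 \<in> CLs a s" "L2 \<in> CLs a s" "R2 \<in> CLs a s" using z1 z2 z1e z2e by auto
    have h1: "even (length L1)" "even (length R1)" "sum_list L1 = sum_list R1"
      using m(1,2) unfolding CLs_def by auto
    have h2: "even (length L2)" "even (length R2)" "sum_list L2 = sum_list R2"
      using m(3,4) unfolding CLs_def by auto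
    have e': "fam G L1 R1 = fam G L2 R2" using e z1e z2e by simp
    have "L1 = L2 \<and> R1 = R2" by (rule fam_inj[OF G' h1 h2 e'])
    then show "z1 = z2" using z1e z2e by simp
  qed
  have sub: "?F ` (CLs a s \<times> CLs a s) \<subseteq> convex_polys_n n"
  proof
    fix P assume "P \<in> ?F ` (CLs a s \<times> CLs a s)"
    then obtain z where z: "z \<in> CLs a s \<times> CLs a s" "P = ?F z" by (rule imageE)
    define L where "L = fst z"
    define R where "R = snd z"
    have P: "P = fam G L R" "L \<in> CLs a s" "R \<in> CLs a s" using z unfolding L_def R_def by (auto simp: mem_Times_iff)
    have h: "even (length L)" "even (length R)" "sum_list L = sum_list R" "cost L = a" "cost R = a"
      using P(2,3) unfolding CLs_def by auto
    have "fam G L R \<in> convex_polys_n (8 + cost L + cost R + gc)" by (rule fam_in[OF h(1,2,3) G])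
    moreover have "8 + cost L + cost R + gc = n" using n h(4,5) by simp
    ultimately show "P \<in> convex_polys_n n" using P(1) by simp
  qed
  have "card (CLs a s \<times> CLs a s) \<le> card (convex_polys_n n)"
    using card_inj_on_le[OF inj sub finite_polys] .
  then show ?thesis by (simp add: power2_eq_square card_cartesian_product)
qed

theorem LB:
  assumes n: "19 \<le> n"
  shows "((3 + sqrt 5) / 2) ^ (n - 19) / (real n + 1) ^ 2 \<le> real (card (convex_polys_n n))"
proof -
  define r :: real where "r = (3 + sqrt 5) / 2"
  have r1: "1 \<le> r" unfolding r_def using real_sqrt_ge_zero[of 5] by simp
  obtain a gc G where G: "G = Ge \<and> gc = 2 \<or> G = Go \<and> gc = 5" and na: "n = 8 + 2 * a + gc"
  proof (cases "even n")
    case True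
    then obtain k where "n = 2 * k" by auto
    then show ?thesis using that[of Ge 2 "k - 5"] n by auto
  next
    case False
    then obtain k where "n = 2 * k + 1" using oddE by blast
    then show ?thesis using that[of Go 5 "k - 6"] n by auto
  qed
  have a3: "3 \<le> a" using na G n by auto
  have a2: "2 * a + 13 \<ge> n" using na G by auto
  obtain s where s: "s \<le> a" "card (CLa a) \<le> (a + 1) * card (CLs a s)" using pigeon[of a] by auto
  have "a - 2 + 2 = a" using a3 by simp
  then have "E (a - 2) \<le> card (CLa a)" using CLa_ge_E[of "a - 2"] by simp
  moreover have "r ^ (a - 3) \<le> real (E (a - 2))"
    using E_lower[of "a - 3"] a3 unfolding r_def by (simp add: Suc_diff_Suc numeral_3_eq_3 numeral_2_eq_2)
  ultimately have "r ^ (a - 3) \<le> real (a + 1) * real (card (CLs a s))"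
    using s(2) by (metis (mono_tags, opaque_lifting) of_nat_le_iff of_nat_mult order_trans)
  then have c1: "r ^ (a - 3) / real (a + 1) \<le> real (card (CLs a s))"
    by (simp add: divide_le_eq mult.commute)
  have c1': "0 \<le> r ^ (a - 3) / real (a + 1)" using r1 by simp
  have "(r ^ (a - 3) / real (a + 1)) ^ 2 \<le> real (card (CLs a s)) ^ 2"
    by (rule power_mono[OF c1 c1'])
  also have "\<dots> \<le> real (card (convex_polys_n n))"
    using card_fam[OF G na, of s] by (metis of_nat_le_iff of_nat_power)
  finally have c2: "(r ^ (a - 3)) ^ 2 / real (a + 1) ^ 2 \<le> real (card (convex_polys_n n))"
    by (simp add: power_divide)
  have "r ^ (n - 19) \<le> (r ^ (a - 3)) ^ 2"
    unfolding power_mult[symmetric] using r1 a2 a3 by (intro power_increasing) auto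
  moreover have "real (a + 1) ^ 2 \<le> (real n + 1) ^ 2" using na by (intro power_mono) auto
  ultimately have "r ^ (n - 19) / (real n + 1) ^ 2 \<le> (r ^ (a - 3)) ^ 2 / real (a + 1) ^ 2"
    using r1 by (intro frac_le) auto
  then show ?thesis using c2 unfolding r_def by linarith
qed


definition rf :: "real \<Rightarrow> real" where "rf y = (2 + y - sqrt (y ^ 2 + 4 * y)) / 2"

lemma rf_props:
  assumes "0 < y"
  shows "0 < rf y" "rf y < 1" "rf y + y * rf y / (1 - rf y) \<le> 1"
proof -
  let ?s = "sqrt (y ^ 2 + 4 * y)"
  have nn: "0 \<le> y ^ 2 + 4 * y" using assms by (intro add_nonneg_nonneg) auto
  have s0: "0 \<le> ?s" using nn by simp
  have ss: "?s ^ 2 = y ^ 2 + 4 * y" using nn by simp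
  have "?s < 2 + y"
  proof -
    have "?s ^ 2 < (2 + y) ^ 2" using ss by (simp add: power2_eq_square algebra_simps)
    then show ?thesis using s0 assms by (smt (verit) power_mono)
  qed
  then show r0: "0 < rf y" unfolding rf_def by simp
  have "y < ?s"
  proof -
    have "y ^ 2 < ?s ^ 2" using ss assms by simp
    then show ?thesis using s0 assms by (smt (verit) power_mono)
  qed
  then show r1: "rf y < 1" unfolding rf_def by simp
  have gen: "((2+y-s)/2)^2 - (2+y)*((2+y-s)/2) + 1 = (s^2 - (y^2+4*y))/(4::real)" for s
    by (simp add: power2_eq_square field_simps)
  have eq: "rf y ^ 2 - (2 + y) * rf y + 1 = 0"
    unfolding rf_def using gen[of ?s] ss by simp
  have "rf y + y * rf y / (1 - rf y) = (rf y * (1 - rf y) + y * rf y) / (1 - rf y)"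
    using r1 by (simp add: field_simps)
  also have "rf y * (1 - rf y) + y * rf y = 1 - rf y" using eq by (simp add: power2_eq_square algebra_simps)
  finally show "rf y + y * rf y / (1 - rf y) \<le> 1" using r1 by simp
qed

lemma rf_1: "rf 1 = (3 - sqrt 5) / 2" unfolding rf_def by simp

lemma rf_deriv:
  "((\<lambda>y. rf y * y powr a) has_real_derivative ((1 - 3 / sqrt 5) / 2 + (3 - sqrt 5) / 2 * a)) (at 1)"
proof -
  have d1: "((\<lambda>y. y ^ 2 + 4 * y) has_real_derivative 6) (at (1::real))"
    by (auto intro!: derivative_eq_intros)
  have d2: "((\<lambda>y. sqrt (y ^ 2 + 4 * y)) has_real_derivative (inverse (sqrt 5) / 2 * 6)) (at (1::real))"
  proof -
    have ds: "(sqrt has_real_derivative (inverse (sqrt 5) / 2)) (at (1 ^ 2 + 4 * 1 :: real))"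
      using DERIV_real_sqrt[of 5] by simp
    show ?thesis using DERIV_chain2[OF ds d1] by simp
  qed
  have d3: "(rf has_real_derivative ((1 - inverse (sqrt 5) / 2 * 6) / 2)) (at 1)"
    unfolding rf_def by (auto intro!: derivative_eq_intros d2)
  have d4: "((\<lambda>y. y powr a) has_real_derivative a) (at (1::real))"
    using has_real_derivative_powr[of 1 a] by simp
  have "((\<lambda>y. rf y * y powr a) has_real_derivative
      ((1 - inverse (sqrt 5) / 2 * 6) / 2 * 1 powr a + a * rf 1)) (at 1)"
    by (rule DERIV_mult[OF d3 d4])
  moreover have "(1 - inverse (sqrt 5) / 2 * 6) / 2 * 1 powr a + a * rf 1 = (1 - 3 / sqrt 5) / 2 + (3 - sqrt 5) / 2 * a"
  proof -
    have "inverse (sqrt 5) / 2 * 6 = 3 / (sqrt 5 :: real)" by (simp add: field_simps)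
    then show ?thesis unfolding rf_1 by simp
  qed
  ultimately show ?thesis by simp
qed

lemma deriv_sign:
  "(1 - 3 / sqrt 5) / 2 + (3 - sqrt 5) / 2 * a = (3 - sqrt 5) / 2 * (a - 1 / sqrt 5)"
proof -
  have h: "(3 - sqrt 5) / 2 * (1 / sqrt 5) = 3 / sqrt 5 / 2 - 1 / (2::real)" by (simp add: field_simps)
  show ?thesis by (simp only: right_diff_distrib h) (simp add: field_simps)
qed

lemma sqrt5_lt3: "sqrt 5 < (3::real)"
  using real_sqrt_less_iff[of 5 9] by simp

lemma high_y:
  assumes "1 / sqrt 5 < a"
  shows "\<exists>y>1. (3 - sqrt 5) / 2 < rf y * y powr a"
proof -
  have pos: "0 < (1 - 3 / sqrt 5) / 2 + (3 - sqrt 5) / 2 * a"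
    unfolding deriv_sign using assms sqrt5_lt3 by simp
  obtain dd where dd: "dd > 0" "\<forall>h>0. h < dd \<longrightarrow> rf 1 * 1 powr a < rf (1 + h) * (1 + h) powr a"
    using DERIV_pos_inc_right[OF rf_deriv pos] by auto
  have "rf 1 * 1 powr a < rf (1 + dd / 2) * (1 + dd / 2) powr a" using dd by auto
  then show ?thesis using dd(1) by (intro exI[of _ "1 + dd / 2"]) (simp add: rf_1)
qed

lemma low_y:
  assumes "a < 1 / sqrt 5"
  shows "\<exists>y. 0 < y \<and> y < 1 \<and> (3 - sqrt 5) / 2 < rf y * y powr a"
proof -
  have neg: "(1 - 3 / sqrt 5) / 2 + (3 - sqrt 5) / 2 * a < 0"
    unfolding deriv_sign using assms sqrt5_lt3 by (simp add: mult_pos_neg)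
  obtain dd where dd: "dd > 0" "\<forall>h>0. h < dd \<longrightarrow> rf 1 * 1 powr a < rf (1 - h) * (1 - h) powr a"
    using DERIV_neg_dec_left[OF rf_deriv neg] by auto
  define h where "h = min (dd / 2) (1 / 2)"
  have h: "0 < h" "h < dd" "h < 1" unfolding h_def using dd(1) by auto
  have "rf 1 * 1 powr a < rf (1 - h) * (1 - h) powr a" using dd h by auto
  then show ?thesis using h by (intro exI[of _ "1 - h"]) (simp add: rf_1)
qed

lemma polyexp_lim:
  assumes "0 \<le> q" "q < 1"
  shows "(\<lambda>n. (real n + 1) ^ k * q ^ n) \<longlonglongrightarrow> 0"
proof -
  define s where "s = root (Suc k) q"
  have s0: "0 \<le> s" and s1: "s < 1" unfolding s_def using assms by (auto simp: real_root_lt_1_iff)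
  have q: "q = s ^ Suc k" unfolding s_def by (rule real_root_pow_pos2[symmetric]) (use assms in auto)
  have l1: "(\<lambda>n. (real n + 1) * s ^ n) \<longlonglongrightarrow> 0"
  proof -
    have "(\<lambda>n. real n * s ^ n + s ^ n) \<longlonglongrightarrow> 0 + 0"
      by (intro tendsto_add powser_times_n_limit_0 LIMSEQ_power_zero) (use s0 s1 in auto)
    then show ?thesis by (simp add: algebra_simps)
  qed
  have "(\<lambda>n. ((real n + 1) * s ^ n) ^ k * s ^ n) \<longlonglongrightarrow> 0 ^ k * 0"
    by (intro tendsto_mult tendsto_power l1 LIMSEQ_power_zero) (use s0 s1 in auto)
  moreover have "((real n + 1) * s ^ n) ^ k * s ^ n = (real n + 1) ^ k * q ^ n" for n
    unfolding q by (simp add: power_mult_distrib power_mult[symmetric] mult.assoc power_add[symmetric])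
      (simp add: mult.commute power_mult add.commute)
  ultimately show ?thesis by simp
qed


lemma d4_le_n:
  assumes "P \<in> convex_polys_n n" shows "d 4 P \<le> n"
proof -
  have cp: "convex_polyomino P" and nz: "normalized P" and nP: "d 2 P + d 3 P = n"
    using assms unfolding convex_polys_n_def by auto
  obtain w b t where Pe: "P = cellsf w b t" and v: "validc w b t"
    using convex_cols[OF cp nz] by blast
  have "d 4 P = (\<Sum>k<w-1. of_bool (t (Suc k) \<noteq> t k) + of_bool (b (Suc k) \<noteq> b k))"
    using D_formula[OF v] Pe by simp
  also have "\<dots> \<le> (\<Sum>k<w-1. ct (t (Suc k) - t k) + ct (b (Suc k) - b k))"
    by (rule sum_mono) (auto simp: ct_def)
  also have "\<dots> \<le> n" using N_formula[OF v] nP Pe by simp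
  finally show ?thesis .
qed

definition rr :: real where "rr = (3 + sqrt 5) / 2"
definition rho :: real where "rho = (3 - sqrt 5) / 2"

lemma rr_rho: "rr * rho = 1" "0 < rho" "1 \<le> rr"
proof -
  show "rr * rho = 1" unfolding rr_def rho_def by (simp add: field_simps)
  show "0 < rho" unfolding rho_def using sqrt5_lt3 by simp
  show "1 \<le> rr" unfolding rr_def by simp
qed

lemma ratio_bound:
  assumes y: "0 < y" and n: "19 \<le> n"
    and H: "\<And>P. P \<in> Hs \<Longrightarrow> y powr (a * real n) \<le> y ^ d 4 P" and Hsub: "Hs \<subseteq> convex_polys_n n"
  shows "real (card Hs) / real (card (convex_polys_n n)) \<le>
     4 * rr ^ 19 * (real n + 1) ^ 7 * (rho / (rf y * y powr a)) ^ n"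
proof -
  let ?S = "convex_polys_n n"
  define x where "x = rf y"
  have x: "0 < x" "x < 1" "x + y * x / (1 - x) \<le> 1" using rf_props[OF y] unfolding x_def by auto
  have fin: "finite ?S" by (rule finite_polys)
  have ypos: "0 < y powr (a * real n)" using y by simp
  have "real (card Hs) = (\<Sum>P\<in>Hs. 1)" by simp
  also have "\<dots> \<le> (\<Sum>P\<in>Hs. y ^ d 4 P / y powr (a * real n))"
    by (rule sum_mono) (use H ypos in auto)
  also have "\<dots> \<le> (\<Sum>P\<in>?S. y ^ d 4 P / y powr (a * real n))"
    by (rule sum_mono2[OF fin Hsub]) (use y in auto)
  also have "\<dots> = (\<Sum>P\<in>?S. x ^ n * y ^ d 4 P) / (x ^ n * y powr (a * real n))"
    using x by (simp add: sum_divide_distrib sum_distrib_left[symmetric])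
  also have "\<dots> \<le> (2 * real n + 1) ^ 2 * (real n + 1) ^ 3 / (x ^ n * y powr (a * real n))"
    by (rule divide_right_mono[OF UB(2)[OF x(1,2) y x(3)]]) (use x y in simp)
  finally have c1: "real (card Hs) \<le> (2 * real n + 1) ^ 2 * (real n + 1) ^ 3 / (x ^ n * y powr (a * real n))" .
  have lb: "rr ^ (n - 19) / (real n + 1) ^ 2 \<le> real (card ?S)" using LB[OF n] unfolding rr_def .
  have lbpos: "0 < rr ^ (n - 19) / (real n + 1) ^ 2" using rr_rho by simp
  have "real (card Hs) / real (card ?S) \<le> real (card Hs) / (rr ^ (n - 19) / (real n + 1) ^ 2)"
  proof (rule divide_left_mono[OF lb])
    have "0 < real (card ?S)" using lb lbpos by linarith
    then show "0 < real (card ?S) * (rr ^ (n - 19) / (real n + 1) ^ 2)" using lbpos by (rule mult_pos_pos)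
  qed simp
  also have "\<dots> \<le> (2 * real n + 1) ^ 2 * (real n + 1) ^ 3 / (x ^ n * y powr (a * real n)) / (rr ^ (n - 19) / (real n + 1) ^ 2)"
    by (rule divide_right_mono[OF c1]) (use lbpos in auto)
  also have "\<dots> = (2 * real n + 1) ^ 2 * (real n + 1) ^ 5 * rr ^ 19 * (rho / (x * y powr a)) ^ n"
  proof -
    have yp: "y powr (a * real n) = (y powr a) ^ n" using y by (simp add: powr_powr[symmetric] powr_realpow)
    have rrn: "rr ^ n = rr ^ (n - 19) * rr ^ 19" using n by (simp add: power_add[symmetric])
    have rhon: "rho ^ n * rr ^ n = 1" using rr_rho(1) by (simp add: power_mult_distrib[symmetric] mult.commute)
    have pos: "0 < x" "0 < y powr a" "0 < rr" "0 < rho" using x y rr_rho by auto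
    have "(2 * real n + 1) ^ 2 * (real n + 1) ^ 3 / (x ^ n * y powr (a * real n)) / (rr ^ (n - 19) / (real n + 1) ^ 2)
        = (2 * real n + 1) ^ 2 * (real n + 1) ^ 5 / (x ^ n * (y powr a) ^ n * rr ^ (n - 19))"
      unfolding yp by (simp add: field_simps power_add[symmetric])
    also have "\<dots> = (2 * real n + 1) ^ 2 * (real n + 1) ^ 5 * rr ^ 19 * (rho / (x * y powr a)) ^ n"
    proof -
      have rhon': "rho ^ n = 1 / (rr ^ (n - 19) * rr ^ 19)" using rrn rhon pos by (simp add: field_simps)
      have "(rho / (x * y powr a)) ^ n = rho ^ n / (x ^ n * (y powr a) ^ n)"
        by (simp add: power_divide power_mult_distrib)
      then show ?thesis unfolding rhon' using pos by (simp add: field_simps)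
    qed
    finally show ?thesis .
  qed
  also have "\<dots> \<le> 4 * (real n + 1) ^ 2 * (real n + 1) ^ 5 * rr ^ 19 * (rho / (x * y powr a)) ^ n"
  proof -
    have "(2 * real n + 1) ^ 2 \<le> 4 * (real n + 1) ^ 2" by (simp add: power2_eq_square algebra_simps)
    moreover have "0 \<le> (real n + 1) ^ 5 * rr ^ 19 * (rho / (x * y powr a)) ^ n"
      using x y rr_rho by simp
    ultimately show ?thesis by (metis (no_types, lifting) mult.assoc mult_right_mono)
  qed
  also have "\<dots> = 4 * rr ^ 19 * (real n + 1) ^ 7 * (rho / (rf y * y powr a)) ^ n"
    unfolding x_def by (simp add: power_add[symmetric] algebra_simps)
  finally show ?thesis .
qed



lemma bound_lim:
  assumes "0 \<le> q" "q < 1"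
  shows "(\<lambda>n. 4 * rr ^ 19 * (real n + 1) ^ 7 * q ^ n) \<longlonglongrightarrow> 0"
proof -
  have "(\<lambda>n. (4 * rr ^ 19) * ((real n + 1) ^ 7 * q ^ n)) \<longlonglongrightarrow> (4 * rr ^ 19) * 0"
    by (intro tendsto_mult tendsto_const polyexp_lim assms)
  then show ?thesis by (simp add: mult.assoc)
qed

lemma tail_generic:
  assumes y: "0 < y" and q: "rho < rf y * y powr a"
    and H: "\<And>n P. P \<in> Hs n \<Longrightarrow> y powr (a * real n) \<le> y ^ d 4 P"
    and Hsub: "\<And>n. Hs n \<subseteq> convex_polys_n n"
  shows "(\<lambda>n. real (card (Hs n)) / real (card (convex_polys_n n))) \<longlonglongrightarrow> 0"
proof -
  define q where "q = rho / (rf y * y powr a)"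
  have rfp: "0 < rf y" using rf_props[OF y] by simp
  have q0: "0 \<le> q" "q < 1" unfolding q_def using rr_rho(2) rfp y q by auto
  show ?thesis
  proof (rule real_tendsto_sandwich[OF _ _ tendsto_const bound_lim[OF q0]])
    show "\<forall>\<^sub>F n in sequentially. 0 \<le> real (card (Hs n)) / real (card (convex_polys_n n))" by simp
    show "\<forall>\<^sub>F n in sequentially. real (card (Hs n)) / real (card (convex_polys_n n)) \<le> 4 * rr ^ 19 * (real n + 1) ^ 7 * q ^ n"
      using eventually_ge_at_top[of 19]
    proof eventually_elim
      case (elim n)
      show ?case using ratio_bound[OF y elim H Hsub] unfolding q_def by simp
    qed
  qed
qed

lemma tail_high:
  assumes "1 / sqrt 5 < a"
  shows "(\<lambda>n. real (card {P \<in> convex_polys_n n. a * real n \<le> real (d 4 P)}) / real (card (convex_polys_n n))) \<longlonglongrightarrow> 0"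
proof -
  obtain y where y: "1 < y" "rho < rf y * y powr a" using high_y[OF assms] unfolding rho_def by auto
  show ?thesis
  proof (rule tail_generic[OF _ y(2)])
    show "0 < y" using y by simp
    fix n P assume "P \<in> {P \<in> convex_polys_n n. a * real n \<le> real (d 4 P)}"
    then have "a * real n \<le> real (d 4 P)" by simp
    then have "y powr (a * real n) \<le> y powr real (d 4 P)" using y by (intro powr_mono) auto
    then show "y powr (a * real n) \<le> y ^ d 4 P" using y by (simp add: powr_realpow)
  qed auto
qed

lemma tail_low:
  assumes "a < 1 / sqrt 5"
  shows "(\<lambda>n. real (card {P \<in> convex_polys_n n. real (d 4 P) \<le> a * real n}) / real (card (convex_polys_n n))) \<longlonglongrightarrow> 0"
proof -
  obtain y where y: "0 < y" "y < 1" "rho < rf y * y powr a" using low_y[OF assms] unfolding rho_def by auto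
  show ?thesis
  proof (rule tail_generic[OF y(1) y(3)])
    fix n P assume "P \<in> {P \<in> convex_polys_n n. real (d 4 P) \<le> a * real n}"
    then have "real (d 4 P) \<le> a * real n" by simp
    then have "y powr (a * real n) \<le> y powr real (d 4 P)" using y by (intro powr_mono') auto
    then show "y powr (a * real n) \<le> y ^ d 4 P" using y by (simp add: powr_realpow)
  qed auto
qed


lemma sqrt5_facts: "1 / 4 < 1 / sqrt (5::real)" "1 / sqrt (5::real) < 1" "0 < sqrt (5::real)"
proof -
  have "sqrt 5 < (4::real)" using real_sqrt_less_iff[of 5 16] by simp
  then show "1 / 4 < 1 / sqrt (5::real)" by (simp add: divide_less_cancel)
  have "1 < sqrt (5::real)" using real_sqrt_less_iff[of 1 5] by simp
  then show "1 / sqrt (5::real) < 1" by simp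
  show "0 < sqrt (5::real)" by simp
qed

lemma exp_bounds:
  assumes n: "19 \<le> n" and al: "0 \<le> al" and be: "0 \<le> be" "be \<le> 1"
  shows "expected_d4 n / real n \<le> al + real (card {P \<in> convex_polys_n n. al * real n \<le> real (d 4 P)}) / real (card (convex_polys_n n))"
    and "be - real (card {P \<in> convex_polys_n n. real (d 4 P) \<le> be * real n}) / real (card (convex_polys_n n)) \<le> expected_d4 n / real n"
proof -
  let ?S = "convex_polys_n n"
  let ?H = "{P \<in> ?S. al * real n \<le> real (d 4 P)}"
  let ?L = "{P \<in> ?S. real (d 4 P) \<le> be * real n}"
  have fin: "finite ?S" by (rule finite_polys)
  have Apos: "0 < real (card ?S)"
  proof -
    have "0 < rr ^ (n - 19) / (real n + 1) ^ 2" using rr_rho by simp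
    then show ?thesis using LB[OF n] unfolding rr_def by linarith
  qed
  have npos: "0 < real n" using n by simp
  let ?D = "(\<Sum>P\<in>?S. real (d 4 P))"
  have ed: "expected_d4 n / real n = ?D / (real (card ?S) * real n)"
    unfolding expected_d4_def by simp
  have finH: "finite ?H" "?H \<subseteq> ?S" and finL: "finite ?L" "?L \<subseteq> ?S" using fin by auto
  have d4n: "real (d 4 P) \<le> real n" if "P \<in> ?S" for P using d4_le_n[OF that] by simp
  have "?D = (\<Sum>P\<in>?H. real (d 4 P)) + (\<Sum>P\<in>?S - ?H. real (d 4 P))"
    by (subst sum.subset_diff[OF finH(2) fin]) simp
  also have "(\<Sum>P\<in>?H. real (d 4 P)) \<le> (\<Sum>P\<in>?H. real n)" by (rule sum_mono) (use d4n in auto)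
  also have "(\<Sum>P\<in>?S - ?H. real (d 4 P)) \<le> (\<Sum>P\<in>?S - ?H. al * real n)" by (rule sum_mono) auto
  also have "(\<Sum>P\<in>?S - ?H. al * real n) \<le> (\<Sum>P\<in>?S. al * real n)"
    by (rule sum_mono2[OF fin]) (use al in auto)
  finally have up: "?D \<le> real n * real (card ?H) + al * real n * real (card ?S)" by (simp add: mult.commute)
  have "expected_d4 n / real n \<le> (real n * real (card ?H) + al * real n * real (card ?S)) / (real (card ?S) * real n)"
    unfolding ed by (rule divide_right_mono[OF up]) (use Apos npos in simp)
  also have "\<dots> = al + real (card ?H) / real (card ?S)" using Apos npos by (simp add: field_simps)
  finally show "expected_d4 n / real n \<le> al + real (card ?H) / real (card ?S)" .
  have "?D = (\<Sum>P\<in>?L. real (d 4 P)) + (\<Sum>P\<in>?S - ?L. real (d 4 P))"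
    by (subst sum.subset_diff[OF finL(2) fin]) simp
  also have "\<dots> \<ge> (\<Sum>P\<in>?S - ?L. real (d 4 P))" by (simp add: sum_nonneg)
  finally have "?D \<ge> (\<Sum>P\<in>?S - ?L. real (d 4 P))" .
  moreover have "(\<Sum>P\<in>?S - ?L. real (d 4 P)) \<ge> (\<Sum>P\<in>?S - ?L. be * real n)" by (rule sum_mono) auto
  moreover have "(\<Sum>P\<in>?S - ?L. be * real n) = be * real n * (real (card ?S) - real (card ?L))"
    using card_Diff_subset[OF finL(1) finL(2)] card_mono[OF fin finL(2)] by (simp add: of_nat_diff)
  ultimately have lo: "be * real n * (real (card ?S) - real (card ?L)) \<le> ?D" by linarith
  have "be * (real (card ?L) / real (card ?S)) \<le> real (card ?L) / real (card ?S)"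
    by (rule mult_left_le_one_le) (use be in auto)
  then have "be - real (card ?L) / real (card ?S) \<le> be - be * (real (card ?L) / real (card ?S))"
    by linarith
  also have "\<dots> = (be * real n * (real (card ?S) - real (card ?L))) / (real (card ?S) * real n)"
    using Apos npos by (simp add: field_simps)
  also have "\<dots> \<le> expected_d4 n / real n"
    unfolding ed by (rule divide_right_mono[OF lo]) (use Apos npos in simp)
  finally show "be - real (card ?L) / real (card ?S) \<le> expected_d4 n / real n" .
qed

lemma exp_over_n: "(\<lambda>n. expected_d4 n / real n) \<longlonglongrightarrow> 1 / sqrt 5"
proof (rule tendstoI)
  fix e :: real assume e: "0 < e"
  define e' where "e' = min e (1 / 2)"
  have e': "0 < e'" "e' \<le> e" "e' \<le> 1 / 2" unfolding e'_def using e by auto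
  define al where "al = 1 / sqrt 5 + e' / 2"
  define be where "be = 1 / sqrt 5 - e' / 2"
  have al: "1 / sqrt 5 < al" "0 \<le> al" unfolding al_def using e' sqrt5_facts by auto
  have be1: "be < 1 / sqrt 5" unfolding be_def using e' by simp
  have be2: "0 \<le> be" unfolding be_def using e'(3) sqrt5_facts(1) by linarith
  have be3: "be \<le> 1" unfolding be_def using e'(1) sqrt5_facts(2) by linarith
  note be = be1 be2 be3
  have ev1: "\<forall>\<^sub>F n in sequentially. real (card {P \<in> convex_polys_n n. al * real n \<le> real (d 4 P)}) / real (card (convex_polys_n n)) < e' / 2"
    using order_tendstoD(2)[OF tail_high[OF al(1)], of "e' / 2"] e' by simp
  have ev2: "\<forall>\<^sub>F n in sequentially. real (card {P \<in> convex_polys_n n. real (d 4 P) \<le> be * real n}) / real (card (convex_polys_n n)) < e' / 2"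
    using order_tendstoD(2)[OF tail_low[OF be(1)], of "e' / 2"] e' by simp
  show "\<forall>\<^sub>F n in sequentially. dist (expected_d4 n / real n) (1 / sqrt 5) < e"
    using ev1 ev2 eventually_ge_at_top[of 19]
  proof eventually_elim
    case (elim n)
    have u: "expected_d4 n / real n < 1 / sqrt 5 + e'"
      using exp_bounds(1)[OF elim(3) al(2) be(2,3)] elim(1) unfolding al_def by linarith
    have l: "1 / sqrt 5 - e' < expected_d4 n / real n"
      using exp_bounds(2)[OF elim(3) al(2) be(2,3)] elim(2) unfolding be_def by linarith
    show ?case using u l e' unfolding dist_real_def by (simp add: abs_less_iff)
  qed
qed

theorem mainTheorem7:
  shows "(\<lambda>n. expected_d4 n /
           (real n / sqrt 5 - root 4 125 * (sqrt 5 - 1) * sqrt (real n) / (10 * sqrt pi)))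
         \<longlonglongrightarrow> 1"
proof -
  define c where "c = root 4 125 * (sqrt 5 - 1) / (10 * sqrt pi)"
  have f: "(\<lambda>n. 1 / sqrt 5 - c * sqrt (inverse (real n))) \<longlonglongrightarrow> 1 / sqrt 5 - c * sqrt 0"
    by (intro tendsto_intros lim_inverse_n)
  have g: "(\<lambda>n. (expected_d4 n / real n) / (1 / sqrt 5 - c * sqrt (inverse (real n)))) \<longlonglongrightarrow> (1 / sqrt 5) / (1 / sqrt 5)"
    by (rule tendsto_divide[OF exp_over_n]) (use f in auto)
  have eq: "(expected_d4 n / real n) / (1 / sqrt 5 - c * sqrt (inverse (real n))) =
      expected_d4 n / (real n / sqrt 5 - root 4 125 * (sqrt 5 - 1) * sqrt (real n) / (10 * sqrt pi))"
    if "1 \<le> n" for n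
  proof -
    have np: "0 < real n" using that by simp
    have "real n * (1 / sqrt 5 - c * sqrt (inverse (real n))) =
        real n / sqrt 5 - root 4 125 * (sqrt 5 - 1) * sqrt (real n) / (10 * sqrt pi)"
    proof -
      have "real n * sqrt (inverse (real n)) = sqrt (real n)"
        using np by (metis real_sqrt_mult_self real_sqrt_inverse real_sqrt_mult nonzero_mult_div_cancel_left
            divide_inverse mult.commute real_div_sqrt less_imp_le)
      then have "real n * (1 / sqrt 5 - c * sqrt (inverse (real n))) = real n / sqrt 5 - c * sqrt (real n)"
        by (simp add: algebra_simps)
      also have "c * sqrt (real n) = root 4 125 * (sqrt 5 - 1) * sqrt (real n) / (10 * sqrt pi)"
        unfolding c_def by simp
      finally show ?thesis .
    qed
    then show ?thesis using np by (metis divide_divide_eq_left)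
  qed
  have "(\<lambda>n. expected_d4 n / (real n / sqrt 5 - root 4 125 * (sqrt 5 - 1) * sqrt (real n) / (10 * sqrt pi))) \<longlonglongrightarrow> (1 / sqrt 5) / (1 / sqrt 5)"
    by (rule Lim_transform_eventually[OF g eventually_mono[OF eventually_ge_at_top[of 1] eq]])
  then show ?thesis by simp
qed


end
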